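(* There is an absolute constant $C>0$ such that the following holds. Let $A\in\mathbb{R}^{m\times n}$ be nonzero, let $b\in\mathbb{R}^m$ be such that $Ax=b$ is consistent, and let $x_\star=A^\dagger b$. Let $0<\delta,\varepsilon<1$ and let $\mathbf{S}\in\mathbb{R}^{d\times m}$ be a count sketch transform with $d\ge C n^2/(\delta\varepsilon^2)$ rows (and $d<m$). Let $x_0\in\mathrm{R}(A^T)$ and let $\{x_k\}_{k\ge 0}$ be generated by the CSK method. Then, with probability at least $1-2\delta$ over the draw of $\mathbf{S}$, for every $k\ge 0$, $$\|x_{k+1}-x_\star\|_2^2\le\left(1-\frac{(1-\varepsilon)^3}{n}\cdot\frac{\sigma_r^2(A)}{\|A\|_2^2}\right)\|x_k-x_\star\|_2^2 .$$
   Context: Count sketch transform: $\mathbf{S}=\Phi D\in\mathbb{R}^{d\times m}$, where $D$ is an $m\times m$ random diagonal matrix whose diagonal entries are independent and equal to $+1$ or $-1$ with probability $1/2$ each, and $\Phi\in\{0,1\}^{d\times m}$ has $\Phi_{h(i),i}=1$ for each $i\in\{1,\dots,m\}$ and all other entries $0$, where $h:\{1,\dots,m\}\to\{1,\dots,d\}$ is a random map with $h(i)$ independent and uniformly distributed on $\{1,\dots,d\}$ for each $i$ (independent of $D$). CSK method: set $\widetilde A=\mathbf{S}A$, $\widetilde b=\mathbf{S}b$; for $k=0,1,2,\dots$ choose $i_k\in\arg\max_{i}\frac{|\widetilde b^{(i)}-\widetilde A^{(i)}x_k|}{\|\widetilde A^{(i)}\|_2}$, the maximum taken over those $i\in\{1,\dots,d\}$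 with $\widetilde A^{(i)}\neq 0$, and set $x_{k+1}=x_k+\frac{\widetilde b^{(i_k)}-\widetilde A^{(i_k)}x_k}{\|\widetilde A^{(i_k)}\|_2^2}(\widetilde A^{(i_k)})^T$. Here $M^{(i)}$ denotes the $i$th row of a matrix $M$ (or $i$th entry of a vector). Notation: $A^\dagger$ is the Moore–Penrose pseudoinverse, $\mathrm{R}(A^T)$ the column space of $A^T$, $\sigma_r(A)$ the smallest nonzero singular value of $A$, $\|\cdot\|_2$ the Euclidean/spectral norm. *)

theory Defs
  imports "HOL-Probability.Probability_Mass_Function" "Jordan_Normal_Form.Char_Poly"
begin

definition vnorm :: "real vec \<Rightarrow> real" where
  "vnorm v = sqrt (scalar_prod v v)"

definition spec_norm :: "real mat \<Rightarrow> real" where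
  "spec_norm A = Sup {vnorm (A *\<^sub>v x) | x. x \<in> carrier_vec (dim_col A) \<and> vnorm x \<le> 1}"

text \<open>Smallest nonzero singular value: the square root of the smallest nonzero
  eigenvalue of A^T A (the singular values of A are the square roots of the eigenvalues of A^T A).\<close>
definition sigma_min_nz :: "real mat \<Rightarrow> real" where
  "sigma_min_nz A = sqrt (Min {l. eigenvalue (transpose_mat A * A) l \<and> l \<noteq> 0})"

definition pinv :: "real mat \<Rightarrow> real mat" where
  "pinv A = (THE X. X \<in> carrier_mat (dim_col A) (dim_row A) \<and>
       A * X * A = A \<and> X * A * X = X \<and>
       transpose_mat (A * X) = A * X \<and> transpose_mat (X * A) = X * A)"

definition row_space :: "real mat \<Rightarrow> real vec set" where
  "row_space A = {transpose_mat A *\<^sub>v y | y. y \<in> carrier_vec (dim_row A)}"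

text \<open>Count sketch matrix S = Phi D (d x m), given the hash map h (values in {0..<d})
  and the diagonal signs s (values in {-1,1}); indices are 0-based.\<close>
definition count_sketch :: "nat \<Rightarrow> nat \<Rightarrow> (nat \<Rightarrow> nat) \<Rightarrow> (nat \<Rightarrow> real) \<Rightarrow> real mat" where
  "count_sketch d m h s = mat d m (\<lambda>(i, j). if h j = i then s j else 0)"

text \<open>Sample space of the count sketch: h uniform on {0..<d}^m, signs uniform on {-1,1}^m,
  all independent (uniform distribution on the product).\<close>
definition cs_space :: "nat \<Rightarrow> nat \<Rightarrow> ((nat \<Rightarrow> nat) \<times> (nat \<Rightarrow> real)) set" where
  "cs_space d m = (PiE {0..<m} (\<lambda>_. {0..<d})) \<times> (PiE {0..<m} (\<lambda>_. {-1, 1}))"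

definition csk_ratio :: "real mat \<Rightarrow> real vec \<Rightarrow> real vec \<Rightarrow> nat \<Rightarrow> real" where
  "csk_ratio At bt x i = \<bar>bt $ i - scalar_prod (row At i) x\<bar> / vnorm (row At i)"

text \<open>x is a sequence generated by the CSK (greedy Kaczmarz) iteration on the sketched
  system (At, bt); ties in the argmax may be broken arbitrarily.\<close>
definition csk_seq :: "real mat \<Rightarrow> real vec \<Rightarrow> (nat \<Rightarrow> real vec) \<Rightarrow> bool" where
  "csk_seq At bt x \<longleftrightarrow> (\<forall>k. \<exists>i < dim_row At.
      row At i \<noteq> 0\<^sub>v (dim_col At) \<and>
      (\<forall>j < dim_row At. row At j \<noteq> 0\<^sub>v (dim_col At) \<longrightarrow>
          csk_ratio At bt (x k) j \<le> csk_ratio At bt (x k) i) \<and>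
      x (Suc k) = x k + ((bt $ i - scalar_prod (row At i) (x k)) / (vnorm (row At i))\<^sup>2)
                          \<cdot>\<^sub>v row At i)"

end

theory Submission
  imports Defs "Jordan_Normal_Form.Spectral_Radius"
begin

no_notation Inner_Product.inner (infix "\<bullet>" 70)


definition proj :: "nat \<Rightarrow> real vec list \<Rightarrow> real vec \<Rightarrow> real vec" where
  "proj N ws u = vec N (\<lambda>i. \<Sum>j<length ws. (ws!j \<bullet> u) * (ws!j $ i))"

definition orthonormal :: "real vec list \<Rightarrow> bool" where
  "orthonormal ws \<longleftrightarrow> (\<forall>i<length ws. \<forall>j<length ws. ws!i \<bullet> ws!j = (if i = j then 1 else 0))"

lemma proj_carrier[simp]: "proj N ws u \<in> carrier_vec N"
  unfolding proj_def by simp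

lemma proj_dim[simp]: "dim_vec (proj N ws u) = N"
  unfolding proj_def by simp

lemma proj_nil[simp]: "proj N [] u = 0\<^sub>v N"
  unfolding proj_def by auto

lemma proj_cons: assumes "w \<in> carrier_vec N"
  shows "proj N (w#ws) u = (w \<bullet> u) \<cdot>\<^sub>v w + proj N ws u"
  using assms unfolding proj_def
  by (intro eq_vecI, auto simp: lessThan_Suc_eq_insert_0 sum.reindex)

lemma scalar_prod_proj:
  assumes z: "z \<in> carrier_vec N" and ws: "set ws \<subseteq> carrier_vec N"
  shows "z \<bullet> proj N ws u = (\<Sum>j<length ws. (ws!j \<bullet> u) * (z \<bullet> ws!j))"
proof -
  have "z \<bullet> proj N ws u = (\<Sum>i<N. z $ i * (\<Sum>j<length ws. (ws!j \<bullet> u) * (ws!j $ i)))"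
    unfolding proj_def scalar_prod_def by (simp add: lessThan_atLeast0)
  also have "\<dots> = (\<Sum>i<N. \<Sum>j<length ws. (ws!j \<bullet> u) * (z $ i * ws!j $ i))"
    by (simp add: sum_distrib_left algebra_simps)
  also have "\<dots> = (\<Sum>j<length ws. \<Sum>i<N. (ws!j \<bullet> u) * (z $ i * ws!j $ i))"
    by (rule sum.swap)
  also have "\<dots> = (\<Sum>j<length ws. (ws!j \<bullet> u) * (z \<bullet> ws!j))"
  proof (rule sum.cong[OF refl])
    fix j assume "j \<in> {..<length ws}"
    hence "ws!j \<in> carrier_vec N" using ws by auto
    thus "(\<Sum>i<N. (ws!j \<bullet> u) * (z $ i * ws!j $ i)) = (ws!j \<bullet> u) * (z \<bullet> ws!j)"
      unfolding scalar_prod_def by (simp add: sum_distrib_left lessThan_atLeast0)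
  qed
  finally show ?thesis .
qed

lemma orthonormal_proj_ortho:
  assumes ws: "set ws \<subseteq> carrier_vec N" and on: "orthonormal ws" and j: "j < length ws"
    and u: "u \<in> carrier_vec N"
  shows "ws!j \<bullet> proj N ws u = ws!j \<bullet> u"
proof -
  have wj: "ws!j \<in> carrier_vec N" using ws j by auto
  have "ws!j \<bullet> proj N ws u = (\<Sum>i<length ws. (ws!i \<bullet> u) * (ws!j \<bullet> ws!i))"
    by (rule scalar_prod_proj[OF wj ws])
  also have "\<dots> = (\<Sum>i<length ws. if i = j then ws!j \<bullet> u else 0)"
    using on j unfolding orthonormal_def by (intro sum.cong, auto)
  also have "\<dots> = ws!j \<bullet> u" using j by simp
  finally show ?thesis .
qed

lemma proj_perp_zero:
  assumes ws: "set ws \<subseteq> carrier_vec N" and z: "z \<in> carrier_vec N"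
    and perp: "\<forall>j<length ws. z \<bullet> ws!j = 0"
  shows "z \<bullet> proj N ws u = 0"
  unfolding scalar_prod_proj[OF z ws] using perp by simp

lemma orthonormal_consI:
  assumes "orthonormal ws" "w \<bullet> w = 1" "\<forall>j<length ws. w \<bullet> ws!j = 0"
    "w \<in> carrier_vec N" "set ws \<subseteq> carrier_vec N"
  shows "orthonormal (w # ws)"
  unfolding orthonormal_def
proof (intro allI impI)
  fix i j assume i: "i < length (w#ws)" and j: "j < length (w#ws)"
  show "(w # ws) ! i \<bullet> (w # ws) ! j = (if i = j then 1 else 0)"
  proof (cases i)
    case 0
    then show ?thesis using assms j by (cases j, auto)
  next
    case (Suc i')
    show ?thesis
    proof (cases j)
      case 0
      have "ws!i' \<in> carrier_vec N" using assms Suc i by auto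
      hence "ws!i' \<bullet> w = w \<bullet> ws!i'" using assms by (metis comm_scalar_prod)
      then show ?thesis using assms Suc 0 i by auto
    next
      case (Suc j')
      then show ?thesis using assms \<open>i = Suc i'\<close> i j unfolding orthonormal_def by auto
    qed
  qed
qed

lemma orthonormal_exists:
  fixes P :: "real vec \<Rightarrow> bool"
  assumes us: "set us \<subseteq> carrier_vec N" and Pus: "\<forall>u\<in>set us. P u"
    and P0: "P (0\<^sub>v N)"
    and Padd: "\<And>x y. x \<in> carrier_vec N \<Longrightarrow> y \<in> carrier_vec N \<Longrightarrow> P x \<Longrightarrow> P y \<Longrightarrow> P (x + y)"
    and Psmult: "\<And>c x. x \<in> carrier_vec N \<Longrightarrow> P x \<Longrightarrow> P (c \<cdot>\<^sub>v x)"
  shows "\<exists>ws. set ws \<subseteq> carrier_vec N \<and> length ws \<le> length us \<and> orthonormal ws \<and>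
     (\<forall>w\<in>set ws. P w) \<and> (\<forall>u\<in>set us. proj N ws u = u)"
  using us Pus
proof (induction us)
  case Nil
  show ?case by (rule exI[of _ "[]"], auto simp: orthonormal_def)
next
  case (Cons u us)
  from Cons obtain ws where ws: "set ws \<subseteq> carrier_vec N" and len: "length ws \<le> length us"
    and on: "orthonormal ws" and Pws: "\<forall>w\<in>set ws. P w" and pr: "\<forall>u\<in>set us. proj N ws u = u"
    by auto
  have u: "u \<in> carrier_vec N" and Pu: "P u" using Cons by auto
  have Pproj: "P (proj N vs x)" if "set vs \<subseteq> carrier_vec N" "\<forall>w\<in>set vs. P w" for vs x
    using that
  proof (induction vs)
    case Nil then show ?case using P0 by simp
  next
    case (Cons w vs)
    then show ?case by (simp add: proj_cons, intro Padd Psmult, auto)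
  qed
  define r where "r = u - proj N ws u"
  have r: "r \<in> carrier_vec N" unfolding r_def using u by simp
  have Pr: "P r"
  proof -
    have "r = u + (-1) \<cdot>\<^sub>v proj N ws u" unfolding r_def using u
      by (intro eq_vecI, auto)
    thus ?thesis using Padd Psmult Pproj[OF ws Pws] Pu u by auto
  qed
  have rperp: "\<forall>j<length ws. r \<bullet> ws!j = 0"
  proof (intro allI impI)
    fix j assume j: "j < length ws"
    have wj: "ws!j \<in> carrier_vec N" using ws j by auto
    have "ws!j \<bullet> r = ws!j \<bullet> u - ws!j \<bullet> proj N ws u" unfolding r_def
      using wj u by (simp add: scalar_prod_minus_distrib)
    also have "\<dots> = 0" using orthonormal_proj_ortho[OF ws on j u] by simp
    finally show "r \<bullet> ws!j = 0" using comm_scalar_prod[OF r wj] by simp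
  qed
  have urp: "u = r + proj N ws u" unfolding r_def using u by (intro eq_vecI, auto)
  show ?case
  proof (cases "r = 0\<^sub>v N")
    case True
    hence "proj N ws u = u" using urp u by (metis left_zero_vec proj_carrier)
    thus ?thesis using ws len on Pws pr by (intro exI[of _ ws], auto)
  next
    case False
    define nr where "nr = sqrt (r \<bullet> r)"
    have rr: "r \<bullet> r > 0"
    proof -
      have "r \<bullet> r = (\<Sum>i<N. (r$i)^2)" using r unfolding scalar_prod_def
        by (simp add: power2_eq_square lessThan_atLeast0)
      moreover obtain i where "i < N" "r $ i \<noteq> 0" using False r by (metis eq_vecI index_zero_vec(1,2) carrier_vecD)
      ultimately show ?thesis
        by (metis (no_types, lifting) finite_lessThan lessThan_iff power_not_zero sum_pos2
            zero_le_power2 zero_less_power2)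
    qed
    hence nr: "nr > 0" "nr * nr = r \<bullet> r" unfolding nr_def by auto
    define w where "w = (1 / nr) \<cdot>\<^sub>v r"
    have w: "w \<in> carrier_vec N" unfolding w_def using r by simp
    have ww: "w \<bullet> w = 1" unfolding w_def using r nr rr
      by (simp add: field_simps)
    have wperp: "\<forall>j<length ws. w \<bullet> ws!j = 0"
      using rperp ws r unfolding w_def by (auto simp: nth_mem subsetD)
    have on': "orthonormal (w # ws)" by (rule orthonormal_consI[OF on ww wperp w ws])
    have Pw: "P w" unfolding w_def by (rule Psmult[OF r Pr])
    have old: "proj N (w#ws) u0 = u0" if "u0 \<in> set us" for u0
    proof -
      have u0: "u0 \<in> carrier_vec N" using that Cons by auto
      have "w \<bullet> u0 = w \<bullet> proj N ws u0" using pr that by simp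
      also have "\<dots> = 0" by (rule proj_perp_zero[OF ws w wperp])
      finally show ?thesis unfolding proj_cons[OF w] using pr that w u0 by (intro eq_vecI, auto)
    qed
    have new: "proj N (w#ws) u = u"
    proof -
      have "r \<bullet> proj N ws u = 0" by (rule proj_perp_zero[OF ws r rperp])
      hence "r \<bullet> u = r \<bullet> r"
        using urp r u by (metis proj_carrier scalar_prod_add_distrib add_0_right)
      hence "w \<bullet> u = nr" unfolding w_def using r u nr by (simp add: field_simps)
      hence "(w \<bullet> u) \<cdot>\<^sub>v w = r" unfolding w_def using nr r
        by (intro eq_vecI, auto)
      thus ?thesis unfolding proj_cons[OF w] using urp by simp
    qed
    show ?thesis
      by (rule exI[of _ "w # ws"], insert ws w len on' Pws Pw old new, auto)
  qed
qed


lemma nth_carrier: "set ws \<subseteq> carrier_vec N \<Longrightarrow> j < length ws \<Longrightarrow> ws!j \<in> carrier_vec N"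
  by (auto simp: nth_mem subsetD)

lemma self_scalar_prod_sum: "(x :: real vec) \<bullet> x = (\<Sum>i<dim_vec x. (x$i)^2)"
  unfolding scalar_prod_def by (simp add: power2_eq_square lessThan_atLeast0)

lemma self_scalar_prod_nonneg: "(x :: real vec) \<bullet> x \<ge> 0"
  unfolding self_scalar_prod_sum by (simp add: sum_nonneg)

lemma self_scalar_prod_zero: assumes "x \<in> carrier_vec N" "(x :: real vec) \<bullet> x = 0"
  shows "x = 0\<^sub>v N"
proof (rule eq_vecI)
  fix i assume i: "i < dim_vec (0\<^sub>v N :: real vec)"
  have "(\<Sum>i<dim_vec x. (x$i)^2) = 0" using assms self_scalar_prod_sum by simp
  hence "\<forall>i\<in>{..<dim_vec x}. (x$i)^2 = 0" by (subst sum_nonneg_eq_0_iff[symmetric], auto)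
  thus "x $ i = 0\<^sub>v N $ i" using i assms by auto
qed (use assms in auto)

lemma vnorm_sq: "(vnorm x)^2 = x \<bullet> x"
  unfolding vnorm_def using self_scalar_prod_nonneg by simp

lemma mat_of_cols_mult_vec:
  assumes ws: "set ws \<subseteq> carrier_vec N" and y: "y \<in> carrier_vec (length ws)"
  shows "mat_of_cols N ws *\<^sub>v y = vec N (\<lambda>i. \<Sum>j<length ws. ws!j $ i * y $ j)"
  using ws y by (intro eq_vecI, auto simp: scalar_prod_def row_def mat_of_cols_index lessThan_atLeast0)

lemma mat_of_cols_transpose_mult_vec:
  assumes ws: "set ws \<subseteq> carrier_vec N" and u: "u \<in> carrier_vec N"
  shows "transpose_mat (mat_of_cols N ws) *\<^sub>v u = vec (length ws) (\<lambda>j. ws!j \<bullet> u)"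
  using ws u by (intro eq_vecI, auto simp: col_mat_of_cols nth_carrier)

lemma mat_of_cols_proj:
  assumes ws: "set ws \<subseteq> carrier_vec N" and u: "u \<in> carrier_vec N"
  shows "mat_of_cols N ws *\<^sub>v (transpose_mat (mat_of_cols N ws) *\<^sub>v u) = proj N ws u"
  unfolding mat_of_cols_transpose_mult_vec[OF ws u]
  by (subst mat_of_cols_mult_vec[OF ws], simp, unfold proj_def, intro eq_vecI, auto simp: mult.commute)

lemma mat_of_cols_orthonormal:
  assumes ws: "set ws \<subseteq> carrier_vec N" and on: "orthonormal ws"
  shows "transpose_mat (mat_of_cols N ws) * mat_of_cols N ws = 1\<^sub>m (length ws)"
  using ws on unfolding orthonormal_def
  by (intro eq_matI, auto simp: col_mat_of_cols nth_carrier)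

lemma orthonormal_length:
  assumes ws: "set ws \<subseteq> carrier_vec N" and on: "orthonormal ws"
  shows "length ws \<le> N"
proof (rule ccontr)
  assume "\<not> length ws \<le> N"
  hence lt: "N < length ws" by simp
  define r where "r = length ws"
  define Q where "Q = mat_of_cols N ws"
  have Q: "Q \<in> carrier_mat N r" unfolding Q_def r_def by simp
  define B :: "real mat" where "B = mat r r (\<lambda>(i,j). if i < N then ws!j $ i else 0)"
  have B: "B \<in> carrier_mat r r" unfolding B_def by simp
  have "det B = 0"
  proof -
    have "det B = (\<Sum> p \<in> {p. p permutes {0 ..< r}}. signof p * (\<Prod> i = 0 ..< r. B $$ (i, p i)))"
      by (rule det_def'[OF B])
    also have "\<dots> = (\<Sum> p \<in> {p. p permutes {0 ..< r}}. 0)"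
    proof (rule sum.cong[OF refl])
      fix p assume p: "p \<in> {p. p permutes {0 ..< r}}"
      have "p N < r" using p lt unfolding r_def by (simp add: permutes_in_image)
      hence "B $$ (N, p N) = 0" unfolding B_def using lt r_def by simp
      hence "(\<Prod> i = 0 ..< r. B $$ (i, p i)) = 0"
        using lt unfolding r_def by (intro prod_zero, auto intro!: bexI[of _ N])
      thus "signof p * (\<Prod> i = 0 ..< r. B $$ (i, p i)) = 0" by simp
    qed
    finally show ?thesis by simp
  qed
  then obtain y where y: "y \<in> carrier_vec r" "y \<noteq> 0\<^sub>v r" "B *\<^sub>v y = 0\<^sub>v r"
    using det_0_iff_vec_prod_zero[OF B] by auto
  have Qy: "Q *\<^sub>v y = 0\<^sub>v N"
  proof (rule eq_vecI)
    fix i assume "i < dim_vec (0\<^sub>v N :: real vec)"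
    hence i: "i < N" by simp
    have "(B *\<^sub>v y) $ i = 0" using y i lt r_def by simp
    moreover have "(B *\<^sub>v y) $ i = (Q *\<^sub>v y) $ i"
      using i lt B Q y(1) unfolding B_def Q_def r_def
      by (auto simp: scalar_prod_def row_def mat_of_cols_index intro!: sum.cong)
    ultimately show "(Q *\<^sub>v y) $ i = 0\<^sub>v N $ i" using i by simp
  qed (use Q in auto)
  have "y = (transpose_mat Q * Q) *\<^sub>v y"
    unfolding Q_def r_def mat_of_cols_orthonormal[OF ws on] using y r_def by simp
  also have "\<dots> = transpose_mat Q *\<^sub>v (Q *\<^sub>v y)" by (rule assoc_mult_mat_vec, insert Q y, auto)
  also have "\<dots> = 0\<^sub>v r" unfolding Qy using Q by (intro eq_vecI, auto)
  finally show False using y by simp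
qed


lemma sym_real_eigenvalue:
  fixes G :: "real mat"
  assumes G: "G \<in> carrier_mat k k" and k: "k > 0" and sym: "transpose_mat G = G"
  shows "\<exists>\<mu>. eigenvalue G \<mu>"
proof -
  define Gc where "Gc = map_mat complex_of_real G"
  have Gc: "Gc \<in> carrier_mat k k" unfolding Gc_def using G by simp
  from spectrum_non_empty[OF Gc k] obtain z where "z \<in> spectrum Gc" by auto
  hence ez: "eigenvalue Gc z" unfolding spectrum_def by simp
  then obtain w where w: "w \<in> carrier_vec k" "w \<noteq> 0\<^sub>v k" "Gc *\<^sub>v w = z \<cdot>\<^sub>v w"
    unfolding eigenvalue_def eigenvector_def using Gc by auto
  have Gij: "G $$ (i,j) = G $$ (j,i)" if "i < k" "j < k" for i j
    using arg_cong[OF sym, of "\<lambda>M. M $$ (j,i)"] that G by auto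
  define S where "S = (\<Sum>i<k. \<Sum>j<k. cnj (w$i) * of_real (G $$ (i,j)) * w$j)"
  define N where "N = (\<Sum>i<k. (cmod (w$i))^2)"
  have S1: "S = z * of_real N"
  proof -
    have "S = (\<Sum>i<k. cnj (w$i) * (Gc *\<^sub>v w) $ i)"
    proof -
      have row: "(Gc *\<^sub>v w) $ i = (\<Sum>j<k. of_real (G $$ (i,j)) * w$j)" if "i < k" for i
        using that Gc w(1) G by (auto simp: Gc_def scalar_prod_def lessThan_atLeast0)
      show ?thesis unfolding S_def
        by (intro sum.cong refl, auto simp: row sum_distrib_left mult.assoc)
    qed
    also have "\<dots> = (\<Sum>i<k. z * (w$i * cnj (w$i)))"
      unfolding w(3) using w by (intro sum.cong refl, auto simp: algebra_simps)
    also have "\<dots> = z * of_real N" unfolding N_def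
      unfolding of_real_sum sum_distrib_left by (intro sum.cong refl, metis complex_norm_square)
    finally show ?thesis .
  qed
  have S2: "cnj S = S"
  proof -
    have "cnj S = (\<Sum>i<k. \<Sum>j<k. w$i * of_real (G $$ (i,j)) * cnj (w$j))"
      unfolding S_def by (simp add: cnj_sum)
    also have "\<dots> = (\<Sum>j<k. \<Sum>i<k. w$i * of_real (G $$ (i,j)) * cnj (w$j))"
      by (rule sum.swap)
    also have "\<dots> = S" unfolding S_def
      by (intro sum.cong refl, auto simp: Gij mult.commute mult.left_commute)
    finally show ?thesis .
  qed
  have Npos: "N > 0"
  proof -
    obtain i where i: "i < k" "w $ i \<noteq> 0" using w by (metis eq_vecI index_zero_vec(1,2) carrier_vecD)
    show ?thesis unfolding N_def
      by (rule sum_pos2[of _ i], insert i, auto)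
  qed
  have "Im S = 0" using S2 by (metis complex_cnj_cancel_iff complex_cnj_complex_of_real Im_complex_of_real
      Reals_cnj_iff Reals_def complex_is_Real_iff)
  hence "Im z * N = 0" using S1 by simp
  hence Imz: "Im z = 0" using Npos by simp
  hence zr: "z = complex_of_real (Re z)" by (simp add: complex_eq_iff)
  have "poly (char_poly Gc) z = 0" using ez eigenvalue_root_char_poly[OF Gc] by simp
  moreover have "char_poly Gc = map_poly complex_of_real (char_poly G)"
    unfolding Gc_def by (rule of_real_hom.char_poly_hom[OF G])
  ultimately have "complex_of_real (poly (char_poly G) (Re z)) = 0"
    by (metis zr of_real_hom.poly_map_poly)
  hence "poly (char_poly G) (Re z) = 0" by simp
  thus ?thesis using eigenvalue_root_char_poly[OF G] by auto
qed


lemma sym_scalar: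
  fixes G :: "real mat"
  assumes G: "G \<in> carrier_mat k k" and sym: "transpose_mat G = G"
    and x: "x \<in> carrier_vec k" and y: "y \<in> carrier_vec k"
  shows "x \<bullet> (G *\<^sub>v y) = (G *\<^sub>v x) \<bullet> y"
  using transpose_vec_mult_scalar[OF G y x] sym by simp

lemma decomp_perp:
  fixes v :: "real vec"
  assumes v: "v \<in> carrier_vec k" and vv: "v \<bullet> v = 1"
    and ws: "set ws \<subseteq> carrier_vec k" and perp: "\<forall>w\<in>set ws. v \<bullet> w = 0"
    and pr: "\<forall>i<k. proj k ws (unit_vec k i - (v $ i) \<cdot>\<^sub>v v) = unit_vec k i - (v $ i) \<cdot>\<^sub>v v"
    and z: "z \<in> carrier_vec k"
  shows "z = (v \<bullet> z) \<cdot>\<^sub>v v + proj k ws z"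
proof -
  define K where "K i l = (\<Sum>j<length ws. ws!j $ i * ws!j $ l)" for i l
  have wc: "\<And>j. j < length ws \<Longrightarrow> ws!j \<in> carrier_vec k" using ws by (auto simp: nth_mem subsetD)
  have wv: "\<And>j. j < length ws \<Longrightarrow> ws!j \<bullet> v = 0"
    using perp wc v by (metis comm_scalar_prod nth_mem)
  have K: "K i l = (if i = l then 1 else 0) - v$i * v$l" if i: "i < k" and l: "l < k" for i l
  proof -
    have "proj k ws (unit_vec k i - (v $ i) \<cdot>\<^sub>v v) $ l = (unit_vec k i - (v $ i) \<cdot>\<^sub>v v) $ l"
      using pr i by simp
    moreover have "ws!j \<bullet> (unit_vec k i - (v $ i) \<cdot>\<^sub>v v) = ws!j $ i" if "j < length ws" for j
      using wc[OF that] wv[OF that] i v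
      by (simp add: scalar_prod_minus_distrib)
    ultimately show ?thesis using l i v unfolding proj_def K_def by auto
  qed
  show ?thesis
  proof (rule eq_vecI)
    fix l assume "l < dim_vec ((v \<bullet> z) \<cdot>\<^sub>v v + proj k ws z)"
    hence l: "l < k" using v by simp
    have "proj k ws z $ l = (\<Sum>j<length ws. (\<Sum>i<k. ws!j $ i * z $ i) * ws!j $ l)"
      unfolding proj_def using l wc z by (auto simp: scalar_prod_def lessThan_atLeast0 intro!: sum.cong)
    also have "\<dots> = (\<Sum>i<k. z $ i * K i l)"
      unfolding K_def by (simp add: sum_distrib_left sum_distrib_right mult_ac sum.swap[of _ "{..<k}"])
    also have "\<dots> = (\<Sum>i<k. (if i = l then z $ i else 0) - v $ l * (v $ i * z $ i))"
      by (intro sum.cong refl, auto simp: K l algebra_simps)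
    also have "\<dots> = z $ l - v $ l * (v \<bullet> z)"
      using l z by (simp add: sum_subtractf sum_distrib_left[symmetric] scalar_prod_def lessThan_atLeast0)
    finally show "z $ l = ((v \<bullet> z) \<cdot>\<^sub>v v + proj k ws z) $ l" using l v by simp
  qed (use v z in simp)
qed

lemma rayleigh:
  fixes G :: "real mat"
  assumes "G \<in> carrier_mat k k" "k > 0" "transpose_mat G = G"
  shows "\<exists>\<mu>. eigenvalue G \<mu> \<and> (\<forall>z\<in>carrier_vec k. \<mu> * (z \<bullet> z) \<le> z \<bullet> (G *\<^sub>v z))"
  using assms
proof (induction k arbitrary: G rule: less_induct)
  case (less k)
  note G = less.prems(1) and k = less.prems(2) and sym = less.prems(3)
  obtain \<mu>1 where "eigenvalue G \<mu>1" using sym_real_eigenvalue[OF G k sym] by auto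
  then obtain v0 where v0: "v0 \<in> carrier_vec k" "v0 \<noteq> 0\<^sub>v k" "G *\<^sub>v v0 = \<mu>1 \<cdot>\<^sub>v v0"
    unfolding eigenvalue_def eigenvector_def using G by auto
  have "v0 \<bullet> v0 \<noteq> 0" using self_scalar_prod_zero[OF v0(1)] v0(2) by auto
  hence v0pos: "v0 \<bullet> v0 > 0" using self_scalar_prod_nonneg[of v0] by linarith
  define v where "v = (1 / sqrt (v0 \<bullet> v0)) \<cdot>\<^sub>v v0"
  have v: "v \<in> carrier_vec k" unfolding v_def using v0 by simp
  have vv: "v \<bullet> v = 1" unfolding v_def using v0(1) v0pos by (simp add: field_simps)
  have Gv: "G *\<^sub>v v = \<mu>1 \<cdot>\<^sub>v v" unfolding v_def using v0 G
    by (simp add: mult_mat_vec smult_smult_assoc mult.commute)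
  define p where "p i = unit_vec k i - (v $ i) \<cdot>\<^sub>v v" for i
  define us where "us = map p [0..<k]"
  have us: "set us \<subseteq> carrier_vec k" unfolding us_def p_def using v by auto
  have Pus: "\<forall>u\<in>set us. v \<bullet> u = 0"
    unfolding us_def p_def using v vv by (auto simp: scalar_prod_minus_distrib)
  obtain ws where ws: "set ws \<subseteq> carrier_vec k" and on: "orthonormal ws"
    and perp: "\<forall>w\<in>set ws. v \<bullet> w = 0" and pr: "\<forall>u\<in>set us. proj k ws u = u"
    using orthonormal_exists[OF us Pus] v
    by (auto simp: scalar_prod_add_distrib)
  have pr': "\<forall>i<k. proj k ws (unit_vec k i - (v $ i) \<cdot>\<^sub>v v) = unit_vec k i - (v $ i) \<cdot>\<^sub>v v"
    using pr unfolding us_def p_def by auto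
  have decomp: "\<And>z. z \<in> carrier_vec k \<Longrightarrow> z = (v \<bullet> z) \<cdot>\<^sub>v v + proj k ws z"
    by (rule decomp_perp[OF v vv ws perp pr'])
  define r where "r = length ws"
  have on2: "orthonormal (v # ws)"
    by (rule orthonormal_consI[OF on vv _ v ws], use perp in auto)
  have rk: "r < k" using orthonormal_length[OF _ on2, of k] v ws unfolding r_def by auto
  define W where "W = mat_of_cols k ws"
  have W: "W \<in> carrier_mat k r" unfolding W_def r_def by simp
  have WTW: "transpose_mat W * W = 1\<^sub>m r" unfolding W_def r_def by (rule mat_of_cols_orthonormal[OF ws on])
  have WWT: "\<And>z. z \<in> carrier_vec k \<Longrightarrow> W *\<^sub>v (transpose_mat W *\<^sub>v z) = proj k ws z"
    unfolding W_def by (rule mat_of_cols_proj[OF ws])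
  have WTv: "transpose_mat W *\<^sub>v v = 0\<^sub>v r"
  proof -
    have "\<forall>j<length ws. ws!j \<bullet> v = 0"
      using perp ws v by (metis comm_scalar_prod nth_mem subsetD)
    thus ?thesis unfolding W_def r_def mat_of_cols_transpose_mult_vec[OF ws v] by (intro eq_vecI, auto)
  qed
  have vW: "v \<bullet> (W *\<^sub>v y) = 0" if "y \<in> carrier_vec r" for y
    using transpose_vec_mult_scalar[OF W that v] WTv that by simp
  define G' where "G' = transpose_mat W * G * W"
  have G': "G' \<in> carrier_mat r r" unfolding G'_def using W G by simp
  have sym': "transpose_mat G' = G'"
  proof -
    have WtG: "transpose_mat W * G \<in> carrier_mat r k" using W G by simp
    have "transpose_mat G' = transpose_mat W * transpose_mat (transpose_mat W * G)"
      unfolding G'_def by (rule transpose_mult[OF WtG W])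
    also have "transpose_mat (transpose_mat W * G) = transpose_mat G * W"
      using transpose_mult[of "transpose_mat W" r k G k] W G by simp
    also have "transpose_mat W * (transpose_mat G * W) = G'"
      unfolding sym G'_def using W G by (simp add: assoc_mult_mat[of _ r k _ k _ r])
    finally show ?thesis .
  qed
  have G'y: "G' *\<^sub>v y = transpose_mat W *\<^sub>v (G *\<^sub>v (W *\<^sub>v y))" if "y \<in> carrier_vec r" for y
  proof -
    have WtG: "transpose_mat W * G \<in> carrier_mat r k" using W G by simp
    have "G' *\<^sub>v y = (transpose_mat W * G) *\<^sub>v (W *\<^sub>v y)"
      unfolding G'_def by (rule assoc_mult_mat_vec[OF WtG W that])
    also have "\<dots> = transpose_mat W *\<^sub>v (G *\<^sub>v (W *\<^sub>v y))"
      by (rule assoc_mult_mat_vec, use W G that in auto)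
    finally show ?thesis .
  qed
  obtain \<mu>2 where e2: "eigenvalue G \<mu>2" and b2: "\<forall>y\<in>carrier_vec r. \<mu>2 * (y \<bullet> y) \<le> y \<bullet> (G' *\<^sub>v y)"
  proof (cases "r = 0")
    case True
    show ?thesis
      by (rule that[of \<mu>1], fact, use True G' in \<open>auto simp: scalar_prod_def\<close>)
  next
    case False
    from less.IH[OF rk G'] False sym' obtain \<mu>2 where
      e: "eigenvalue G' \<mu>2" and b: "\<forall>y\<in>carrier_vec r. \<mu>2 * (y \<bullet> y) \<le> y \<bullet> (G' *\<^sub>v y)" by auto
    from e obtain y where y: "y \<in> carrier_vec r" "y \<noteq> 0\<^sub>v r" "G' *\<^sub>v y = \<mu>2 \<cdot>\<^sub>v y"
      unfolding eigenvalue_def eigenvector_def using G' by auto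
    define zz where "zz = W *\<^sub>v y"
    have zz: "zz \<in> carrier_vec k" unfolding zz_def using W y by simp
    have Gzz: "G *\<^sub>v zz \<in> carrier_vec k" using G zz by simp
    have "v \<bullet> (G *\<^sub>v zz) = (G *\<^sub>v v) \<bullet> zz" by (rule sym_scalar[OF G sym v zz])
    also have "\<dots> = 0" unfolding Gv using v zz vW[OF y(1)] zz_def by simp
    finally have vGzz: "v \<bullet> (G *\<^sub>v zz) = 0" .
    have dd: "G *\<^sub>v zz = (v \<bullet> (G *\<^sub>v zz)) \<cdot>\<^sub>v v + proj k ws (G *\<^sub>v zz)" by (rule decomp[OF Gzz])
    have "G *\<^sub>v zz = 0 \<cdot>\<^sub>v v + proj k ws (G *\<^sub>v zz)" using dd vGzz by metis
    also have "\<dots> = proj k ws (G *\<^sub>v zz)" using v by (intro eq_vecI, auto)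
    finally have "G *\<^sub>v zz = proj k ws (G *\<^sub>v zz)" .
    also have "\<dots> = W *\<^sub>v (G' *\<^sub>v y)" unfolding G'y[OF y(1)] using WWT[OF Gzz] zz_def by simp
    also have "\<dots> = \<mu>2 \<cdot>\<^sub>v zz" unfolding y(3) zz_def using W y by (simp add: mult_mat_vec)
    finally have eig: "G *\<^sub>v zz = \<mu>2 \<cdot>\<^sub>v zz" .
    have "transpose_mat W *\<^sub>v zz = y" unfolding zz_def
      using W y assoc_mult_mat_vec[of "transpose_mat W" r k W r y] WTW by simp
    hence "zz \<noteq> 0\<^sub>v k" using y W by auto
    hence "eigenvalue G \<mu>2" unfolding eigenvalue_def eigenvector_def using G zz eig by auto
    thus ?thesis using that b by auto
  qed
  show ?case
  proof (intro exI[of _ "min \<mu>1 \<mu>2"] conjI ballI)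
    show "eigenvalue G (min \<mu>1 \<mu>2)" using e2 \<open>eigenvalue G \<mu>1\<close> by (cases "\<mu>1 \<le> \<mu>2", auto simp: min_def)
    fix z :: "real vec" assume z: "z \<in> carrier_vec k"
    define c where "c = v \<bullet> z"
    define y where "y = transpose_mat W *\<^sub>v z"
    have y: "y \<in> carrier_vec r" unfolding y_def using W z by simp
    define u where "u = W *\<^sub>v y"
    have u: "u \<in> carrier_vec k" unfolding u_def using W y by simp
    have zd: "z = c \<cdot>\<^sub>v v + u" unfolding c_def u_def y_def WWT[OF z] by (rule decomp[OF z])
    have vu: "v \<bullet> u = 0" unfolding u_def by (rule vW[OF y])
    have uv: "u \<bullet> v = 0" using vu comm_scalar_prod[OF u v] by simp
    have uu: "u \<bullet> u = y \<bullet> y"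
    proof -
      have "u \<bullet> u = (transpose_mat W *\<^sub>v u) \<bullet> y" unfolding u_def
        using transpose_vec_mult_scalar[OF W y, of "W *\<^sub>v y"] W y by simp
      also have "transpose_mat W *\<^sub>v u = y" unfolding u_def
        using W y assoc_mult_mat_vec[of "transpose_mat W" r k W r y] WTW by simp
      finally show ?thesis .
    qed
    have Gu: "G *\<^sub>v u \<in> carrier_vec k" using G u by simp
    have vGu: "v \<bullet> (G *\<^sub>v u) = 0"
      using sym_scalar[OF G sym v u] Gv vu v u by simp
    have uGu: "u \<bullet> (G *\<^sub>v u) = y \<bullet> (G' *\<^sub>v y)"
    proof -
      have c1: "W *\<^sub>v y \<in> carrier_vec k" "G *\<^sub>v (W *\<^sub>v y) \<in> carrier_vec k"
        "transpose_mat W *\<^sub>v (G *\<^sub>v (W *\<^sub>v y)) \<in> carrier_vec r" using W y G by auto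
      have "(transpose_mat W *\<^sub>v (G *\<^sub>v (W *\<^sub>v y))) \<bullet> y = (G *\<^sub>v (W *\<^sub>v y)) \<bullet> (W *\<^sub>v y)"
        by (rule transpose_vec_mult_scalar[OF W y c1(2)])
      thus ?thesis unfolding G'y[OF y] u_def using c1 y by (metis comm_scalar_prod)
    qed
    have Gz: "G *\<^sub>v z = (c * \<mu>1) \<cdot>\<^sub>v v + G *\<^sub>v u"
      unfolding zd using G v u Gv by (simp add: mult_add_distrib_mat_vec mult_mat_vec smult_smult_assoc)
    have zGz: "z \<bullet> (G *\<^sub>v z) = c * c * \<mu>1 + y \<bullet> (G' *\<^sub>v y)"
    proof -
      have "z \<bullet> (G *\<^sub>v z) = (c \<cdot>\<^sub>v v + u) \<bullet> ((c * \<mu>1) \<cdot>\<^sub>v v + G *\<^sub>v u)" unfolding Gz using zd by simp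
      also have "\<dots> = c * (c * \<mu>1) * (v \<bullet> v) + c * (v \<bullet> (G *\<^sub>v u)) + (c * \<mu>1) * (u \<bullet> v) + u \<bullet> (G *\<^sub>v u)"
        using v u Gu by (simp add: add_scalar_prod_distrib[of _ k] scalar_prod_add_distrib[of _ k] algebra_simps)
      finally show ?thesis using vv vGu uv uGu by simp
    qed
    have zz: "z \<bullet> z = c * c + y \<bullet> y"
    proof -
      have "z \<bullet> z = (c \<cdot>\<^sub>v v + u) \<bullet> (c \<cdot>\<^sub>v v + u)" using zd by simp
      also have "\<dots> = c * c * (v \<bullet> v) + c * (v \<bullet> u) + c * (u \<bullet> v) + u \<bullet> u"
        using v u by (simp add: add_scalar_prod_distrib[of _ k] scalar_prod_add_distrib[of _ k] algebra_simps)
      finally show ?thesis using vv vu uv uu by simp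
    qed
    have yy: "y \<bullet> y \<ge> 0" by (rule self_scalar_prod_nonneg)
    have cc: "c * c \<ge> 0" by simp
    have "min \<mu>1 \<mu>2 * (z \<bullet> z) = min \<mu>1 \<mu>2 * (c * c) + min \<mu>1 \<mu>2 * (y \<bullet> y)"
      unfolding zz by (simp add: algebra_simps)
    also have "\<dots> \<le> \<mu>1 * (c * c) + \<mu>2 * (y \<bullet> y)"
      by (intro add_mono mult_right_mono yy cc, auto)
    also have "\<dots> \<le> z \<bullet> (G *\<^sub>v z)" unfolding zGz using b2 y by (simp add: mult.commute)
    finally show "min \<mu>1 \<mu>2 * (z \<bullet> z) \<le> z \<bullet> (G *\<^sub>v z)" .
  qed
qed


lemma rowspace_basis:
  fixes A :: "real mat"
  assumes A: "A \<in> carrier_mat m n"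
  shows "\<exists>V T r. r \<le> m \<and> V \<in> carrier_mat n r \<and> T \<in> carrier_mat m r \<and> transpose_mat V * V = 1\<^sub>m r \<and>
     (V * transpose_mat V) * transpose_mat A = transpose_mat A \<and> V = transpose_mat A * T"
proof -
  define us where "us = map (row A) [0..<m]"
  have us: "set us \<subseteq> carrier_vec n" unfolding us_def using A by auto
  let ?P = "\<lambda>w. \<exists>t \<in> carrier_vec m. w = transpose_mat A *\<^sub>v t"
  have Pus: "\<forall>u\<in>set us. ?P u"
  proof
    fix u assume "u \<in> set us"
    then obtain i where i: "i < m" "u = row A i" unfolding us_def by auto
    have "transpose_mat A *\<^sub>v unit_vec m i = col (transpose_mat A) i"
      using A i by (intro eq_vecI, auto)
    thus "?P u" using i A by (intro bexI[of _ "unit_vec m i"], auto)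
  qed
  have P0: "?P (0\<^sub>v n)" using A by (intro bexI[of _ "0\<^sub>v m"], auto)
  have Padd: "?P (x + y)" if "?P x" "?P y" for x y
  proof -
    from that obtain t1 t2 where t: "t1 \<in> carrier_vec m" "t2 \<in> carrier_vec m"
      "x = transpose_mat A *\<^sub>v t1" "y = transpose_mat A *\<^sub>v t2" by auto
    show ?thesis using t A by (intro bexI[of _ "t1 + t2"], auto simp: mult_add_distrib_mat_vec[of _ n m])
  qed
  have Psm: "?P (c \<cdot>\<^sub>v x)" if "?P x" for c x
  proof -
    from that obtain t where t: "t \<in> carrier_vec m" "x = transpose_mat A *\<^sub>v t" by auto
    show ?thesis using t A by (intro bexI[of _ "c \<cdot>\<^sub>v t"], auto simp: mult_mat_vec)
  qed
  obtain ws where ws: "set ws \<subseteq> carrier_vec n" and on: "orthonormal ws" and lws: "length ws \<le> length us"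
    and Pws: "\<forall>w\<in>set ws. ?P w" and pr: "\<forall>u\<in>set us. proj n ws u = u"
    using orthonormal_exists[OF us Pus P0] Padd Psm by blast
  define r where "r = length ws"
  define V where "V = mat_of_cols n ws"
  have V: "V \<in> carrier_mat n r" unfolding V_def r_def by simp
  have VTV: "transpose_mat V * V = 1\<^sub>m r" unfolding V_def r_def by (rule mat_of_cols_orthonormal[OF ws on])
  define ts where "ts = map (\<lambda>w. SOME t. t \<in> carrier_vec m \<and> w = transpose_mat A *\<^sub>v t) ws"
  have ts: "\<forall>j<r. ts!j \<in> carrier_vec m \<and> ws!j = transpose_mat A *\<^sub>v (ts!j)"
  proof (intro allI impI)
    fix j assume j: "j < r"
    have "?P (ws!j)" using Pws j unfolding r_def by auto
    hence "\<exists>t. t \<in> carrier_vec m \<and> ws!j = transpose_mat A *\<^sub>v t" by auto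
    from someI_ex[OF this] show "ts!j \<in> carrier_vec m \<and> ws!j = transpose_mat A *\<^sub>v (ts!j)"
      unfolding ts_def using j r_def by auto
  qed
  define T where "T = mat_of_cols m ts"
  have lts: "length ts = r" unfolding ts_def r_def by simp
  have T: "T \<in> carrier_mat m r" unfolding T_def using lts mat_of_cols_carrier(1)[of m ts] by simp
  have tsc: "set ts \<subseteq> carrier_vec m" using ts lts by (auto simp: in_set_conv_nth)
  have VAT: "V = transpose_mat A * T"
  proof (rule mat_col_eqI)
    fix j assume "j < dim_col (transpose_mat A * T)"
    hence j: "j < r" using T A by simp
    have "col (transpose_mat A * T) j = transpose_mat A *\<^sub>v col T j"
      using A T j by (intro col_mult2, auto)
    also have "col T j = ts!j" unfolding T_def using j lts ts by (intro col_mat_of_cols, auto)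
    also have "transpose_mat A *\<^sub>v ts!j = ws!j" using ts j by simp
    also have "ws!j = col V j" unfolding V_def using j ws r_def by (simp add: col_mat_of_cols nth_carrier)
    finally show "col V j = col (transpose_mat A * T) j" by simp
  qed (use A T V in auto)
  have proj_eq: "V *\<^sub>v (transpose_mat V *\<^sub>v x) = proj n ws x" if "x \<in> carrier_vec n" for x
    unfolding V_def by (rule mat_of_cols_proj[OF ws that])
  have PiA: "(V * transpose_mat V) * transpose_mat A = transpose_mat A"
  proof (rule mat_col_eqI)
    fix i assume "i < dim_col (transpose_mat A)"
    hence i: "i < m" using A by simp
    have "col ((V * transpose_mat V) * transpose_mat A) i = (V * transpose_mat V) *\<^sub>v col (transpose_mat A) i"
      using A V i by (intro col_mult2, auto)
    also have "col (transpose_mat A) i = row A i" using A i by simp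
    also have "(V * transpose_mat V) *\<^sub>v row A i = V *\<^sub>v (transpose_mat V *\<^sub>v row A i)"
      using V A i by (intro assoc_mult_mat_vec, auto)
    also have "\<dots> = proj n ws (row A i)" using proj_eq A i by simp
    also have "\<dots> = row A i" using pr i unfolding us_def by auto
    finally show "col (V * transpose_mat V * transpose_mat A) i = col (transpose_mat A) i"
      using A i by simp
  qed (use A V in auto)
  have "r \<le> m" using lws unfolding r_def us_def by simp
  thus ?thesis using V T VTV PiA VAT by blast
qed


lemma assoc_dim: assumes "dim_col (A :: 'a :: semiring_0 mat) = dim_row B" "dim_col B = dim_row C"
  shows "(A * B) * C = A * (B * C)"
proof -
  have a: "A \<in> carrier_mat (dim_row A) (dim_col A)" by (rule carrier_matI, auto)
  have b: "B \<in> carrier_mat (dim_col A) (dim_col B)" using assms by (intro carrier_matI, auto)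
  have c: "C \<in> carrier_mat (dim_col B) (dim_col C)" using assms by (intro carrier_matI, auto)
  show ?thesis by (rule assoc_mult_mat[OF a b c])
qed

definition penrose :: "real mat \<Rightarrow> real mat \<Rightarrow> bool" where
  "penrose A X \<longleftrightarrow> X \<in> carrier_mat (dim_col A) (dim_row A) \<and>
       A * X * A = A \<and> X * A * X = X \<and>
       transpose_mat (A * X) = A * X \<and> transpose_mat (X * A) = X * A"

lemma pinv_unique:
  assumes A: "A \<in> carrier_mat m n" and X: "penrose A X" and Y: "penrose A Y"
  shows "X = Y"
proof -
  have Xc: "X \<in> carrier_mat n m" and Yc: "Y \<in> carrier_mat n m" using X Y A unfolding penrose_def by auto
  note c = A Xc Yc
  note d = carrier_matD[OF A] carrier_matD[OF Xc] carrier_matD[OF Yc]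
  have X1: "A * X * A = A" "X * A * X = X" "transpose_mat (A * X) = A * X" "transpose_mat (X * A) = X * A"
    using X unfolding penrose_def by auto
  have Y1: "A * Y * A = A" "Y * A * Y = Y" "transpose_mat (A * Y) = A * Y" "transpose_mat (Y * A) = Y * A"
    using Y unfolding penrose_def by auto
  have s1: "X = X * (transpose_mat X * transpose_mat A)"
  proof -
    have "X = X * A * X" using X1(2) by simp
    also have "\<dots> = X * (A * X)" using d by (simp add: assoc_dim)
    also have "A * X = transpose_mat X * transpose_mat A"
      using X1(3) transpose_mult[OF A Xc] by simp
    finally show ?thesis .
  qed
  have s2: "transpose_mat A = transpose_mat A * (A * Y)"
  proof -
    have "transpose_mat A = transpose_mat (A * Y * A)" using Y1(1) by simp
    also have "\<dots> = transpose_mat A * transpose_mat (A * Y)"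
      using transpose_mult[of "A * Y" m m A n] c by simp
    finally show ?thesis using Y1(3) by simp
  qed
  have s3: "X = X * A * Y"
  proof -
    have "X = X * (transpose_mat X * transpose_mat A)" by (rule s1)
    also have "\<dots> = X * (transpose_mat X * (transpose_mat A * (A * Y)))"
      by (rule arg_cong[where f="\<lambda>Z. X * (transpose_mat X * Z)"], rule s2)
    also have "\<dots> = (X * (transpose_mat X * transpose_mat A)) * (A * Y)" using d by (simp add: assoc_dim)
    also have "\<dots> = X * (A * Y)"
      by (rule arg_cong[where f="\<lambda>Z. Z * (A * Y)"], rule s1[symmetric])
    also have "\<dots> = X * A * Y" using d by (simp add: assoc_dim)
    finally show ?thesis .
  qed
  have s4: "Y = transpose_mat A * (transpose_mat Y * Y)"
  proof -
    have "Y = (Y * A) * Y" using Y1(2) by simp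
    also have "Y * A = transpose_mat A * transpose_mat Y"
      using Y1(4) transpose_mult[OF Yc A] by simp
    finally show ?thesis using d by (simp add: assoc_dim)
  qed
  have s5: "transpose_mat A = X * A * transpose_mat A"
  proof -
    have "transpose_mat A = transpose_mat (A * X * A)" using X1(1) by simp
    also have "A * X * A = A * (X * A)" using d by (simp add: assoc_dim)
    also have "transpose_mat (A * (X * A)) = transpose_mat (X * A) * transpose_mat A"
      using transpose_mult[of A m n "X * A" n] c by simp
    finally show ?thesis using X1(4) by simp
  qed
  have s6: "Y = X * A * Y"
  proof -
    have "Y = transpose_mat A * (transpose_mat Y * Y)" by (rule s4)
    also have "\<dots> = X * A * transpose_mat A * (transpose_mat Y * Y)"
      by (rule arg_cong[where f="\<lambda>Z. Z * (transpose_mat Y * Y)"], rule s5)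
    also have "\<dots> = X * A * (transpose_mat A * transpose_mat Y) * Y" using d by (simp add: assoc_dim)
    also have "transpose_mat A * transpose_mat Y = Y * A"
      using Y1(4) transpose_mult[OF Yc A] by simp
    also have "X * A * (Y * A) * Y = X * A * (Y * A * Y)" using d by (simp add: assoc_dim)
    finally show ?thesis using Y1(2) by simp
  qed
  show ?thesis using s3 s6 by simp
qed


lemma pinv_exists:
  fixes A :: "real mat"
  assumes A: "A \<in> carrier_mat m n"
  shows "\<exists>X. penrose A X"
proof -
  obtain V T r where V: "V \<in> carrier_mat n r" and T: "T \<in> carrier_mat m r"
    and VTV: "transpose_mat V * V = 1\<^sub>m r"
    and PiA: "(V * transpose_mat V) * transpose_mat A = transpose_mat A" and VAT: "V = transpose_mat A * T"
    using rowspace_basis[OF A] by blast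
  define B where "B = A * V"
  have B: "B \<in> carrier_mat m r" unfolding B_def using A V by simp
  define G where "G = transpose_mat B * B"
  have G: "G \<in> carrier_mat r r" unfolding G_def using B by simp
  note d = carrier_matD[OF A] carrier_matD[OF V] carrier_matD[OF B] carrier_matD[OF G]
  have symP: "transpose_mat (V * transpose_mat V) = V * transpose_mat V"
    using transpose_mult[of V n r "transpose_mat V" n] V by simp
  have f1: "A * (V * transpose_mat V) = A"
  proof -
    have "transpose_mat ((V * transpose_mat V) * transpose_mat A) = A * transpose_mat (V * transpose_mat V)"
      using transpose_mult[of "V * transpose_mat V" n n "transpose_mat A" m] V A by simp
    thus ?thesis using PiA symP by simp
  qed
  have K: "transpose_mat B * A = G * transpose_mat V"
  proof -
    have "transpose_mat B * A = transpose_mat B * (A * (V * transpose_mat V))" using f1 by simp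
    also have "\<dots> = (transpose_mat B * (A * V)) * transpose_mat V" using d by (simp add: assoc_dim)
    finally show ?thesis unfolding G_def B_def .
  qed
  have Ginj: "y = 0\<^sub>v r" if y: "y \<in> carrier_vec r" and Gy: "G *\<^sub>v y = 0\<^sub>v r" for y
  proof -
    have By: "B *\<^sub>v y \<in> carrier_vec m" using B y by simp
    have "(B *\<^sub>v y) \<bullet> (B *\<^sub>v y) = (transpose_mat B *\<^sub>v (B *\<^sub>v y)) \<bullet> y"
      using transpose_vec_mult_scalar[OF B y By] By y by (metis comm_scalar_prod mult_mat_vec_carrier transpose_carrier_mat B)
    also have "transpose_mat B *\<^sub>v (B *\<^sub>v y) = G *\<^sub>v y" unfolding G_def
      using B y by (simp add: assoc_mult_mat_vec[of _ r m _ r])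
    finally have "(B *\<^sub>v y) \<bullet> (B *\<^sub>v y) = 0" using Gy y by simp
    hence By0: "B *\<^sub>v y = 0\<^sub>v m" using self_scalar_prod_zero[OF By] by simp
    have Vy: "V *\<^sub>v y \<in> carrier_vec n" using V y by simp
    have Ty: "T *\<^sub>v y \<in> carrier_vec m" using T y by simp
    have "V *\<^sub>v y = transpose_mat A *\<^sub>v (T *\<^sub>v y)" unfolding VAT using A T y
      by (simp add: assoc_mult_mat_vec[of _ n m _ r])
    hence "(V *\<^sub>v y) \<bullet> (V *\<^sub>v y) = (T *\<^sub>v y) \<bullet> (A *\<^sub>v (V *\<^sub>v y))"
      using transpose_vec_mult_scalar[OF A Vy Ty] by simp
    also have "A *\<^sub>v (V *\<^sub>v y) = B *\<^sub>v y" unfolding B_def using A V y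
      by (simp add: assoc_mult_mat_vec[of _ m n _ r])
    finally have "(V *\<^sub>v y) \<bullet> (V *\<^sub>v y) = 0" unfolding By0 using Ty by simp
    hence V0: "V *\<^sub>v y = 0\<^sub>v n" using self_scalar_prod_zero[OF Vy] by simp
    have "y = (transpose_mat V * V) *\<^sub>v y" unfolding VTV using y by simp
    also have "\<dots> = transpose_mat V *\<^sub>v (V *\<^sub>v y)" using V y by (simp add: assoc_mult_mat_vec[of _ r n _ r])
    also have "\<dots> = 0\<^sub>v r" unfolding V0 using V by (intro eq_vecI, auto)
    finally show ?thesis .
  qed
  have "det G \<noteq> 0" using Ginj det_0_iff_vec_prod_zero[OF G] by auto
  from det_non_zero_imp_unit[OF G this] obtain Gi where Gi: "Gi \<in> carrier_mat r r"
    and GiG: "Gi * G = 1\<^sub>m r" and GGi: "G * Gi = 1\<^sub>m r"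
    unfolding Units_def ring_mat_def by auto
  have symG: "transpose_mat G = G" unfolding G_def using transpose_mult[of "transpose_mat B" r m B r] B by simp
  have symGi: "transpose_mat Gi = Gi"
  proof -
    have "transpose_mat (Gi * G) = G * transpose_mat Gi"
      using transpose_mult[OF Gi G] symG by simp
    hence GGit: "G * transpose_mat Gi = 1\<^sub>m r" using GiG by simp
    have "Gi = Gi * (G * transpose_mat Gi)" using GGit Gi by simp
    also have "\<dots> = (Gi * G) * transpose_mat Gi" using Gi G by (simp add: assoc_dim)
    finally show ?thesis using GiG Gi by simp
  qed
  note d = d carrier_matD[OF Gi]
  define X where "X = V * Gi * transpose_mat B"
  have X: "X \<in> carrier_mat n m" unfolding X_def using V Gi B by simp
  have AX: "A * X = B * Gi * transpose_mat B"
    unfolding X_def B_def using d by (simp add: assoc_dim)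
  have XA: "X * A = V * transpose_mat V"
  proof -
    have "X * A = V * Gi * (transpose_mat B * A)" unfolding X_def using d by (simp add: assoc_dim)
    also have "\<dots> = V * (Gi * G) * transpose_mat V" unfolding K using d by (simp add: assoc_dim)
    finally show ?thesis unfolding GiG using V by simp
  qed
  have p1: "A * X * A = A"
  proof -
    have "A * X * A = B * Gi * (transpose_mat B * A)" unfolding AX using d by (simp add: assoc_dim)
    also have "\<dots> = B * (Gi * G) * transpose_mat V" unfolding K using d by (simp add: assoc_dim)
    also have "\<dots> = A * (V * transpose_mat V)" unfolding GiG B_def using d V by (simp add: assoc_dim)
    finally show ?thesis using f1 by simp
  qed
  have p2: "X * A * X = X"
  proof -
    have "X * A * X = V * transpose_mat V * X" unfolding XA ..
    also have "\<dots> = V * (transpose_mat V * V) * Gi * transpose_mat B" unfolding X_def using d by (simp add: assoc_dim)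
    finally have "X * A * X = V * (transpose_mat V * V) * Gi * transpose_mat B" .
    thus ?thesis unfolding VTV X_def using V Gi B by simp
  qed
  have p3: "transpose_mat (A * X) = A * X"
  proof -
    have "transpose_mat (B * Gi * transpose_mat B) = transpose_mat (transpose_mat B) * transpose_mat (B * Gi)"
      by (rule transpose_mult, use B Gi in auto)
    also have "transpose_mat (B * Gi) = transpose_mat Gi * transpose_mat B"
      by (rule transpose_mult, use B Gi in auto)
    finally show ?thesis unfolding AX symGi using d by (simp add: assoc_dim)
  qed
  have p4: "transpose_mat (X * A) = X * A" unfolding XA by (rule symP)
  have "penrose A X" unfolding penrose_def using X p1 p2 p3 p4 A by auto
  thus ?thesis by blast
qed

lemma pinv_penrose:
  fixes A :: "real mat"
  assumes A: "A \<in> carrier_mat m n"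
  shows "penrose A (pinv A)"
proof -
  obtain X where X: "penrose A X" using pinv_exists[OF A] by blast
  have "pinv A = X" unfolding pinv_def
    by (rule the_equality, fold penrose_def, rule X, rule pinv_unique[OF A _ X], simp)
  thus ?thesis using X by simp
qed

lemma pinv_solution:
  fixes A :: "real mat"
  assumes A: "A \<in> carrier_mat m n" and b: "b \<in> carrier_vec m"
    and cons: "\<exists>x \<in> carrier_vec n. A *\<^sub>v x = b"
  shows "pinv A *\<^sub>v b \<in> carrier_vec n" "A *\<^sub>v (pinv A *\<^sub>v b) = b"
    "\<exists>y \<in> carrier_vec m. pinv A *\<^sub>v b = transpose_mat A *\<^sub>v y"
proof -
  define X where "X = pinv A"
  have P: "penrose A X" unfolding X_def by (rule pinv_penrose[OF A])
  hence Xc: "X \<in> carrier_mat n m" and p1: "A * X * A = A" and p2: "X * A * X = X"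
    and p4: "transpose_mat (X * A) = X * A"
    unfolding penrose_def using A by auto
  obtain x where x: "x \<in> carrier_vec n" "A *\<^sub>v x = b" using cons by auto
  show "pinv A *\<^sub>v b \<in> carrier_vec n" using Xc b X_def by simp
  have AXc: "A * X \<in> carrier_mat m m" using A Xc by simp
  have "(A * X * A) *\<^sub>v x = (A * X) *\<^sub>v (A *\<^sub>v x)" by (rule assoc_mult_mat_vec[OF AXc A x(1)])
  also have "\<dots> = A *\<^sub>v (X *\<^sub>v b)" unfolding x(2) by (rule assoc_mult_mat_vec[OF A Xc b])
  finally have "A *\<^sub>v (X *\<^sub>v b) = (A * X * A) *\<^sub>v x" by simp
  thus "A *\<^sub>v (pinv A *\<^sub>v b) = b" using p1 x(2) X_def by simp
  have XAX: "X = transpose_mat A * (transpose_mat X * X)"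
  proof -
    have "X = (X * A) * X" using p2 by simp
    also have "X * A = transpose_mat A * transpose_mat X" using p4 transpose_mult[OF Xc A] by simp
    finally show ?thesis using A Xc by (simp add: assoc_dim)
  qed
  have "X *\<^sub>v b = transpose_mat A *\<^sub>v ((transpose_mat X * X) *\<^sub>v b)"
    by (subst XAX, rule assoc_mult_mat_vec, use A Xc b in auto)
  thus "\<exists>y \<in> carrier_vec m. pinv A *\<^sub>v b = transpose_mat A *\<^sub>v y"
    unfolding X_def using Xc b X_def by (intro bexI[of _ "(transpose_mat X * X) *\<^sub>v b"], auto)
qed


lemma quad_form:
  fixes B :: "real mat"
  assumes B: "B \<in> carrier_mat m r" and c: "c \<in> carrier_vec r"
  shows "c \<bullet> ((transpose_mat B * B) *\<^sub>v c) = (B *\<^sub>v c) \<bullet> (B *\<^sub>v c)"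
proof -
  have Bc: "B *\<^sub>v c \<in> carrier_vec m" using B c by simp
  have "(transpose_mat B * B) *\<^sub>v c = transpose_mat B *\<^sub>v (B *\<^sub>v c)"
    by (rule assoc_mult_mat_vec, use B c in auto)
  moreover have "(transpose_mat B *\<^sub>v (B *\<^sub>v c)) \<bullet> c = (B *\<^sub>v c) \<bullet> (B *\<^sub>v c)"
    by (rule transpose_vec_mult_scalar[OF B c Bc])
  ultimately show ?thesis using comm_scalar_prod[of c r "transpose_mat B *\<^sub>v (B *\<^sub>v c)"] B c by simp
qed

lemma basis_inj:
  fixes A :: "real mat"
  assumes A: "A \<in> carrier_mat m n" and V: "V \<in> carrier_mat n r" and T: "T \<in> carrier_mat m r"
    and VTV: "transpose_mat V * V = 1\<^sub>m r" and VAT: "V = transpose_mat A * T"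
    and y: "y \<in> carrier_vec r" and AVy: "A *\<^sub>v (V *\<^sub>v y) = 0\<^sub>v m"
  shows "y = 0\<^sub>v r"
proof -
  have Vy: "V *\<^sub>v y \<in> carrier_vec n" using V y by simp
  have Ty: "T *\<^sub>v y \<in> carrier_vec m" using T y by simp
  have "V *\<^sub>v y = transpose_mat A *\<^sub>v (T *\<^sub>v y)" unfolding VAT
    by (rule assoc_mult_mat_vec, use A T y in auto)
  hence "(V *\<^sub>v y) \<bullet> (V *\<^sub>v y) = (T *\<^sub>v y) \<bullet> (A *\<^sub>v (V *\<^sub>v y))"
    using transpose_vec_mult_scalar[OF A Vy Ty] by simp
  hence "(V *\<^sub>v y) \<bullet> (V *\<^sub>v y) = 0" unfolding AVy using Ty by simp
  hence V0: "V *\<^sub>v y = 0\<^sub>v n" using self_scalar_prod_zero[OF Vy] by simp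
  have "y = (transpose_mat V * V) *\<^sub>v y" unfolding VTV using y by simp
  also have "\<dots> = transpose_mat V *\<^sub>v (V *\<^sub>v y)" by (rule assoc_mult_mat_vec, use V y in auto)
  also have "\<dots> = 0\<^sub>v r" unfolding V0 using V by (intro eq_vecI, auto)
  finally show ?thesis .
qed

lemma sigma_bound:
  fixes A :: "real mat"
  assumes A: "A \<in> carrier_mat m n" and A0: "A \<noteq> 0\<^sub>m m n"
  shows "(sigma_min_nz A)^2 > 0"
    "\<forall>e\<in>row_space A. (sigma_min_nz A)^2 * (e \<bullet> e) \<le> (A *\<^sub>v e) \<bullet> (A *\<^sub>v e)"
proof -
  obtain V T r where V: "V \<in> carrier_mat n r" and T: "T \<in> carrier_mat m r"
    and VTV: "transpose_mat V * V = 1\<^sub>m r"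
    and PiA: "(V * transpose_mat V) * transpose_mat A = transpose_mat A" and VAT: "V = transpose_mat A * T"
    using rowspace_basis[OF A] by blast
  define B where "B = A * V"
  have B: "B \<in> carrier_mat m r" unfolding B_def using A V by simp
  define G where "G = transpose_mat B * B"
  have G: "G \<in> carrier_mat r r" unfolding G_def using B by simp
  have symG: "transpose_mat G = G" unfolding G_def using transpose_mult[of "transpose_mat B" r m B r] B by simp
  have r0: "r > 0"
  proof (rule ccontr)
    assume "\<not> r > 0"
    hence r: "r = 0" by simp
    have "V * transpose_mat V = 0\<^sub>m n n" using V r by (intro eq_matI, auto simp: scalar_prod_def)
    hence "transpose_mat A = 0\<^sub>m n n * transpose_mat A" using PiA by simp
    also have "\<dots> = 0\<^sub>m n m" using A by simp
    finally have "A = 0\<^sub>m m n" by (metis transpose_transpose zero_transpose_mat)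
    thus False using A0 by simp
  qed
  obtain \<mu> where ev: "eigenvalue G \<mu>" and ray: "\<forall>z\<in>carrier_vec r. \<mu> * (z \<bullet> z) \<le> z \<bullet> (G *\<^sub>v z)"
    using rayleigh[OF G r0 symG] by blast
  from ev obtain y where y: "y \<in> carrier_vec r" "y \<noteq> 0\<^sub>v r" "G *\<^sub>v y = \<mu> \<cdot>\<^sub>v y"
    unfolding eigenvalue_def eigenvector_def using G by auto
  have yy: "y \<bullet> y > 0" using self_scalar_prod_zero[OF y(1)] y(2) self_scalar_prod_nonneg[of y]
    by (metis less_eq_real_def)
  have "\<mu> * (y \<bullet> y) = y \<bullet> (G *\<^sub>v y)" unfolding y(3) using y(1) by simp
  also have "\<dots> = (B *\<^sub>v y) \<bullet> (B *\<^sub>v y)" unfolding G_def by (rule quad_form[OF B y(1)])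
  finally have muyy: "\<mu> * (y \<bullet> y) = (B *\<^sub>v y) \<bullet> (B *\<^sub>v y)" .
  have mu0: "\<mu> \<noteq> 0"
  proof
    assume "\<mu> = 0"
    hence "(B *\<^sub>v y) \<bullet> (B *\<^sub>v y) = 0" using muyy by simp
    hence "B *\<^sub>v y = 0\<^sub>v m" using self_scalar_prod_zero[of "B *\<^sub>v y" m] B y by simp
    hence "A *\<^sub>v (V *\<^sub>v y) = 0\<^sub>v m" unfolding B_def using A V y
      by (metis assoc_mult_mat_vec)
    hence "y = 0\<^sub>v r" by (rule basis_inj[OF A V T VTV VAT y(1)])
    thus False using y by simp
  qed
  define M where "M = transpose_mat A * A"
  have M: "M \<in> carrier_mat n n" unfolding M_def using A by simp
  have PiAv: "V *\<^sub>v (transpose_mat V *\<^sub>v (transpose_mat A *\<^sub>v w)) = transpose_mat A *\<^sub>v w"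
    if w: "w \<in> carrier_vec m" for w
  proof -
    have "transpose_mat A *\<^sub>v w = ((V * transpose_mat V) * transpose_mat A) *\<^sub>v w" using PiA by simp
    also have "\<dots> = (V * transpose_mat V) *\<^sub>v (transpose_mat A *\<^sub>v w)"
      by (rule assoc_mult_mat_vec, use V A w in auto)
    also have "\<dots> = V *\<^sub>v (transpose_mat V *\<^sub>v (transpose_mat A *\<^sub>v w))"
      by (rule assoc_mult_mat_vec, use V A w in auto)
    finally show ?thesis by simp
  qed
  have VtAt: "transpose_mat V *\<^sub>v (transpose_mat A *\<^sub>v w) = transpose_mat B *\<^sub>v w"
    if w: "w \<in> carrier_vec m" for w
  proof -
    have "transpose_mat B = transpose_mat V * transpose_mat A" unfolding B_def by (rule transpose_mult[OF A V])
    thus ?thesis using V A w by (metis assoc_mult_mat_vec transpose_carrier_mat)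
  qed
  define z where "z = V *\<^sub>v y"
  have z: "z \<in> carrier_vec n" unfolding z_def using V y by simp
  have Bz: "B *\<^sub>v y = A *\<^sub>v z" unfolding B_def z_def by (rule assoc_mult_mat_vec, use A V y in auto)
  have "M *\<^sub>v z = transpose_mat A *\<^sub>v (B *\<^sub>v y)" unfolding M_def Bz
    by (rule assoc_mult_mat_vec, use A z in auto)
  also have "\<dots> = V *\<^sub>v (transpose_mat B *\<^sub>v (B *\<^sub>v y))" using PiAv[of "B *\<^sub>v y"] VtAt[of "B *\<^sub>v y"] B y by simp
  also have "transpose_mat B *\<^sub>v (B *\<^sub>v y) = G *\<^sub>v y" unfolding G_def
    by (rule assoc_mult_mat_vec[symmetric], use B y in auto)
  also have "V *\<^sub>v (G *\<^sub>v y) = \<mu> \<cdot>\<^sub>v z" unfolding y(3) z_def using V y by (simp add: mult_mat_vec)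
  finally have Mz: "M *\<^sub>v z = \<mu> \<cdot>\<^sub>v z" .
  have "z \<noteq> 0\<^sub>v n"
  proof
    assume "z = 0\<^sub>v n"
    hence "A *\<^sub>v (V *\<^sub>v y) = 0\<^sub>v m" unfolding z_def using A by (intro eq_vecI, auto)
    hence "y = 0\<^sub>v r" by (rule basis_inj[OF A V T VTV VAT y(1)])
    thus False using y by simp
  qed
  hence evM: "eigenvalue M \<mu>" unfolding eigenvalue_def eigenvector_def using M z Mz by auto
  define S where "S = {l. eigenvalue M l \<and> l \<noteq> 0}"
  have finS: "finite S" unfolding S_def using card_finite_spectrum(1)[OF M]
    unfolding spectrum_def by (rule rev_finite_subset, auto)
  have muS: "\<mu> \<in> S" unfolding S_def using evM mu0 by simp
  have Spos: "l > 0" if "l \<in> S" for l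
  proof -
    from that obtain w where w: "w \<in> carrier_vec n" "w \<noteq> 0\<^sub>v n" "M *\<^sub>v w = l \<cdot>\<^sub>v w" and l0: "l \<noteq> 0"
      unfolding S_def eigenvalue_def eigenvector_def using M by auto
    have ww: "w \<bullet> w > 0" using self_scalar_prod_zero[OF w(1)] w(2) self_scalar_prod_nonneg[of w]
      by (metis less_eq_real_def)
    have "l * (w \<bullet> w) = w \<bullet> (M *\<^sub>v w)" unfolding w(3) using w(1) by simp
    also have "\<dots> = (A *\<^sub>v w) \<bullet> (A *\<^sub>v w)" unfolding M_def by (rule quad_form[OF A w(1)])
    finally have "l * (w \<bullet> w) \<ge> 0" using self_scalar_prod_nonneg by simp
    hence "l \<ge> 0" using ww by (simp add: zero_le_mult_iff)
    thus ?thesis using l0 by simp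
  qed
  have MinS: "Min S \<in> S" using finS muS by (intro Min_in, auto)
  have sig: "(sigma_min_nz A)^2 = Min S" unfolding sigma_min_nz_def S_def[symmetric] M_def[symmetric]
    using Spos[OF MinS] by simp
  show "(sigma_min_nz A)^2 > 0" unfolding sig using Spos[OF MinS] .
  have Minmu: "Min S \<le> \<mu>" using finS muS by simp
  show "\<forall>e\<in>row_space A. (sigma_min_nz A)^2 * (e \<bullet> e) \<le> (A *\<^sub>v e) \<bullet> (A *\<^sub>v e)"
  proof
    fix e assume "e \<in> row_space A"
    then obtain t where t: "t \<in> carrier_vec m" "e = transpose_mat A *\<^sub>v t"
      unfolding row_space_def using A by auto
    define c where "c = transpose_mat V *\<^sub>v e"
    have c: "c \<in> carrier_vec r" unfolding c_def using V t A by simp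
    have ec: "e = V *\<^sub>v c" unfolding c_def t(2) using PiAv[OF t(1)] by simp
    have ee: "e \<bullet> e = c \<bullet> c"
    proof -
      have "e \<bullet> e = c \<bullet> ((transpose_mat V * V) *\<^sub>v c)" unfolding ec by (rule quad_form[OF V c, symmetric])
      thus ?thesis unfolding VTV using c by simp
    qed
    have Ae: "A *\<^sub>v e = B *\<^sub>v c" unfolding ec B_def by (rule assoc_mult_mat_vec[symmetric], use A V c in auto)
    have "(sigma_min_nz A)^2 * (e \<bullet> e) \<le> \<mu> * (c \<bullet> c)" unfolding sig ee
      using Minmu self_scalar_prod_nonneg[of c] by (simp add: mult_right_mono)
    also have "\<dots> \<le> c \<bullet> (G *\<^sub>v c)" using ray c by simp
    also have "\<dots> = (A *\<^sub>v e) \<bullet> (A *\<^sub>v e)" unfolding Ae G_def by (rule quad_form[OF B c])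
    finally show "(sigma_min_nz A)^2 * (e \<bullet> e) \<le> (A *\<^sub>v e) \<bullet> (A *\<^sub>v e)" .
  qed
qed


lemma vec_cauchy_schwarz:
  fixes v w :: "real vec"
  assumes "dim_vec v = dim_vec w"
  shows "(v \<bullet> w)^2 \<le> (v \<bullet> v) * (w \<bullet> w)"
  using Cauchy_Schwarz_ineq_sum[of "\<lambda>i. v $ i" "\<lambda>i. w $ i" "{0..<dim_vec w}"] assms
  unfolding scalar_prod_def by (simp add: power2_eq_square)

lemma spec_norm_bound:
  fixes A :: "real mat"
  assumes A: "A \<in> carrier_mat m n"
  shows "spec_norm A \<ge> 0" "\<And>l. l < n \<Longrightarrow> (A *\<^sub>v unit_vec n l) \<bullet> (A *\<^sub>v unit_vec n l) \<le> (spec_norm A)^2"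
proof -
  define Sset where "Sset = {vnorm (A *\<^sub>v x) | x. x \<in> carrier_vec (dim_col A) \<and> vnorm x \<le> 1}"
  define F where "F = (\<Sum>i<m. row A i \<bullet> row A i)"
  have bdd: "bdd_above Sset" unfolding bdd_above_def
  proof (intro exI[of _ "sqrt F"] ballI)
    fix s assume "s \<in> Sset"
    then obtain x where x: "x \<in> carrier_vec n" "vnorm x \<le> 1" "s = vnorm (A *\<^sub>v x)"
      unfolding Sset_def using A by auto
    have xx: "x \<bullet> x \<le> 1" using x(2) vnorm_sq[of x] vnorm_def
      by (metis abs_of_nonneg power_le_one real_sqrt_abs2 real_sqrt_ge_zero self_scalar_prod_nonneg)
    have "(A *\<^sub>v x) \<bullet> (A *\<^sub>v x) = (\<Sum>i<m. (row A i \<bullet> x)^2)"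
      using A self_scalar_prod_sum[of "A *\<^sub>v x"] by simp
    also have "\<dots> \<le> (\<Sum>i<m. row A i \<bullet> row A i)"
    proof (rule sum_mono)
      fix i assume i: "i \<in> {..<m}"
      have "(row A i \<bullet> x)^2 \<le> (row A i \<bullet> row A i) * (x \<bullet> x)"
        by (rule vec_cauchy_schwarz, use A x in simp)
      also have "\<dots> \<le> row A i \<bullet> row A i" using xx self_scalar_prod_nonneg[of "row A i"]
        by (simp add: mult_left_le)
      finally show "(row A i \<bullet> x)^2 \<le> row A i \<bullet> row A i" .
    qed
    finally show "s \<le> sqrt F" unfolding x(3) F_def vnorm_def by simp
  qed
  have A0: "A *\<^sub>v 0\<^sub>v n = 0\<^sub>v m" using A by (intro eq_vecI, auto)
  have ne: "0 \<in> Sset" unfolding Sset_def using A A0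
    by (auto intro!: exI[of _ "0\<^sub>v n"] simp: vnorm_def)
  have sn: "spec_norm A = Sup Sset" unfolding spec_norm_def Sset_def ..
  show "spec_norm A \<ge> 0" unfolding sn using cSup_upper[OF ne bdd] .
  fix l assume l: "l < n"
  have "vnorm (A *\<^sub>v unit_vec n l) \<in> Sset" unfolding Sset_def using A l
    by (auto intro!: exI[of _ "unit_vec n l"] simp: vnorm_def)
  hence "vnorm (A *\<^sub>v unit_vec n l) \<le> spec_norm A" unfolding sn using bdd by (simp add: cSup_upper)
  hence "(vnorm (A *\<^sub>v unit_vec n l))^2 \<le> (spec_norm A)^2"
    by (intro power_mono, auto simp: vnorm_def self_scalar_prod_nonneg)
  thus "(A *\<^sub>v unit_vec n l) \<bullet> (A *\<^sub>v unit_vec n l) \<le> (spec_norm A)^2" unfolding vnorm_sq .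
qed

lemma kacz_step:
  fixes At :: "real mat"
  assumes At: "At \<in> carrier_mat d n" and xs: "xs \<in> carrier_vec n" and bt: "bt = At *\<^sub>v xs"
    and xk: "xk \<in> carrier_vec n" and i: "i < d" and ai: "row At i \<noteq> 0\<^sub>v n"
    and greedy: "\<forall>j < d. row At j \<noteq> 0\<^sub>v n \<longrightarrow> csk_ratio At bt xk j \<le> csk_ratio At bt xk i"
    and x': "x' = xk + ((bt $ i - scalar_prod (row At i) xk) / (vnorm (row At i))\<^sup>2) \<cdot>\<^sub>v row At i"
  shows "x' \<in> carrier_vec n"
    "(\<Sum>j<d. row At j \<bullet> row At j) > 0"
    "(x' - xs) \<bullet> (x' - xs) \<le> (xk - xs) \<bullet> (xk - xs)
        - ((At *\<^sub>v (xk - xs)) \<bullet> (At *\<^sub>v (xk - xs))) / (\<Sum>j<d. row At j \<bullet> row At j)"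
proof -
  define e where "e = xk - xs"
  have e: "e \<in> carrier_vec n" unfolding e_def using xk xs by simp
  define a where "a j = row At j" for j
  have a: "a j \<in> carrier_vec n" for j unfolding a_def row_def using At by auto
  define F where "F = (\<Sum>j<d. a j \<bullet> a j)"
  have resid: "bt $ j - a j \<bullet> xk = - (a j \<bullet> e)" if "j < d" for j
  proof -
    have "a j \<bullet> (xk - xs) = a j \<bullet> xk - a j \<bullet> xs" by (rule scalar_prod_minus_distrib[OF a xk xs])
    moreover have "bt $ j = a j \<bullet> xs" unfolding bt a_def using At that by simp
    ultimately show ?thesis unfolding e_def by simp
  qed
  have ratio: "(csk_ratio At bt xk j)^2 = (a j \<bullet> e)^2 / (a j \<bullet> a j)" if "j < d" for j
    unfolding csk_ratio_def using resid[OF that] unfolding a_def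
    by (simp add: power_divide vnorm_sq)
  have aa_pos: "a j \<bullet> a j > 0" if "a j \<noteq> 0\<^sub>v n" for j
    using self_scalar_prod_zero[OF a] self_scalar_prod_nonneg[of "a j"] that by (metis less_eq_real_def)
  have aipos: "a i \<bullet> a i > 0" using aa_pos ai unfolding a_def by simp
  show "x' \<in> carrier_vec n" unfolding x' using xk a[of i] unfolding a_def by simp
  have Fpos: "F > 0" unfolding F_def
    by (rule sum_pos2[of _ i], use i aipos self_scalar_prod_nonneg in auto)
  thus "(\<Sum>j<d. row At j \<bullet> row At j) > 0" unfolding F_def a_def .
  define c where "c = - (a i \<bullet> e) / (a i \<bullet> a i)"
  have x'e: "x' - xs = e + c \<cdot>\<^sub>v a i"
    unfolding x' c_def resid[OF i, unfolded a_def] vnorm_sq e_def a_def using xk xs At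
    by (intro eq_vecI, auto)
  have e'e': "(x' - xs) \<bullet> (x' - xs) = e \<bullet> e - (a i \<bullet> e)^2 / (a i \<bullet> a i)"
  proof -
    have ae: "e \<bullet> a i = a i \<bullet> e" using comm_scalar_prod[OF e a] .
    have "(x' - xs) \<bullet> (x' - xs) = e \<bullet> e + 2 * c * (a i \<bullet> e) + c * c * (a i \<bullet> a i)"
      unfolding x'e using e a ae
      by (simp add: add_scalar_prod_distrib[of _ n] scalar_prod_add_distrib[of _ n] algebra_simps)
    also have "\<dots> = e \<bullet> e - (a i \<bullet> e)^2 / (a i \<bullet> a i)" unfolding c_def using aipos
      by (simp add: field_simps power2_eq_square)
    finally show ?thesis .
  qed
  have "(At *\<^sub>v e) \<bullet> (At *\<^sub>v e) = (\<Sum>j<d. (a j \<bullet> e)^2)"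
    using At self_scalar_prod_sum[of "At *\<^sub>v e"] unfolding a_def by simp
  also have "\<dots> \<le> (\<Sum>j<d. (csk_ratio At bt xk i)^2 * (a j \<bullet> a j))"
  proof (rule sum_mono)
    fix j assume j: "j \<in> {..<d}"
    show "(a j \<bullet> e)^2 \<le> (csk_ratio At bt xk i)^2 * (a j \<bullet> a j)"
    proof (cases "a j = 0\<^sub>v n")
      case True
      then show ?thesis using e by (simp add: self_scalar_prod_nonneg)
    next
      case False
      have pos: "a j \<bullet> a j > 0" using aa_pos[OF False] .
      have "csk_ratio At bt xk j \<le> csk_ratio At bt xk i" using greedy False j unfolding a_def by auto
      moreover have "csk_ratio At bt xk j \<ge> 0" unfolding csk_ratio_def vnorm_def by (simp add: self_scalar_prod_nonneg)
      ultimately have "(csk_ratio At bt xk j)^2 \<le> (csk_ratio At bt xk i)^2"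
        by (intro power_mono, auto)
      hence "(a j \<bullet> e)^2 / (a j \<bullet> a j) \<le> (csk_ratio At bt xk i)^2" using ratio j by simp
      thus ?thesis using pos by (simp add: divide_le_eq)
    qed
  qed
  also have "\<dots> = (csk_ratio At bt xk i)^2 * F" unfolding F_def by (simp add: sum_distrib_left)
  finally have "(At *\<^sub>v e) \<bullet> (At *\<^sub>v e) / F \<le> (a i \<bullet> e)^2 / (a i \<bullet> a i)"
    using ratio[OF i] Fpos by (simp add: divide_le_eq)
  thus "(x' - xs) \<bullet> (x' - xs) \<le> (xk - xs) \<bullet> (xk - xs)
        - ((At *\<^sub>v (xk - xs)) \<bullet> (At *\<^sub>v (xk - xs))) / (\<Sum>j<d. row At j \<bullet> row At j)"
    unfolding e'e' using e_def F_def a_def by simp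
qed


lemma frob_rows_cols:
  fixes At :: "real mat"
  assumes At: "At \<in> carrier_mat d n"
  shows "(\<Sum>j<d. row At j \<bullet> row At j) = (\<Sum>l<n. (At *\<^sub>v unit_vec n l) \<bullet> (At *\<^sub>v unit_vec n l))"
proof -
  have "(\<Sum>j<d. row At j \<bullet> row At j) = (\<Sum>j<d. \<Sum>l<n. (At $$ (j,l))^2)"
    using At by (intro sum.cong refl, auto simp: self_scalar_prod_sum)
  also have "\<dots> = (\<Sum>l<n. \<Sum>j<d. (At $$ (j,l))^2)" by (rule sum.swap)
  also have "\<dots> = (\<Sum>l<n. (At *\<^sub>v unit_vec n l) \<bullet> (At *\<^sub>v unit_vec n l))"
  proof (intro sum.cong refl)
    fix l assume l: "l \<in> {..<n}"
    have "(At *\<^sub>v unit_vec n l) $ j = At $$ (j,l)" if "j < d" for j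
      using At l that by (simp add: scalar_prod_right_unit)
    thus "(\<Sum>j<d. (At $$ (j,l))^2) = (At *\<^sub>v unit_vec n l) \<bullet> (At *\<^sub>v unit_vec n l)"
      using At by (auto simp: self_scalar_prod_sum)
  qed
  finally show ?thesis .
qed

lemma row_mult_transpose:
  fixes S A :: "real mat"
  assumes S: "S \<in> carrier_mat d m" and A: "A \<in> carrier_mat m n" and i: "i < d"
  shows "row (S * A) i = transpose_mat A *\<^sub>v row S i"
  using S A i by (intro eq_vecI, auto simp: comm_scalar_prod[of _ m])

lemma det_main:
  fixes A S :: "real mat" and b :: "real vec" and x :: "nat \<Rightarrow> real vec"
  assumes A: "A \<in> carrier_mat m n" and A0: "A \<noteq> 0\<^sub>m m n" and S: "S \<in> carrier_mat d m"
    and b: "b \<in> carrier_vec m" and cons: "\<exists>x \<in> carrier_vec n. A *\<^sub>v x = b"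
    and eps: "0 < \<epsilon>" "\<epsilon> < 1"
    and emb: "\<forall>z\<in>carrier_vec n. (1 - \<epsilon>) * ((A *\<^sub>v z) \<bullet> (A *\<^sub>v z)) \<le> (S *\<^sub>v (A *\<^sub>v z)) \<bullet> (S *\<^sub>v (A *\<^sub>v z))
        \<and> (S *\<^sub>v (A *\<^sub>v z)) \<bullet> (S *\<^sub>v (A *\<^sub>v z)) \<le> (1 + \<epsilon>) * ((A *\<^sub>v z) \<bullet> (A *\<^sub>v z))"
    and x0: "x 0 \<in> row_space A"
    and seq: "csk_seq (S * A) (S *\<^sub>v b) x"
  shows "(vnorm (x (Suc k) - pinv A *\<^sub>v b))\<^sup>2 \<le>
        (1 - (1 - \<epsilon>)^3 / real n * ((sigma_min_nz A)\<^sup>2 / (spec_norm A)\<^sup>2)) * (vnorm (x k - pinv A *\<^sub>v b))\<^sup>2"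
proof -
  define xs where "xs = pinv A *\<^sub>v b"
  have xs: "xs \<in> carrier_vec n" "A *\<^sub>v xs = b" "\<exists>y \<in> carrier_vec m. xs = transpose_mat A *\<^sub>v y"
    using pinv_solution[OF A b cons] unfolding xs_def by auto
  define At where "At = S * A"
  have At: "At \<in> carrier_mat d n" unfolding At_def using S A by simp
  have bt: "S *\<^sub>v b = At *\<^sub>v xs" unfolding At_def xs(2)[symmetric]
    by (rule assoc_mult_mat_vec[symmetric], use S A xs in auto)
  have inv: "\<exists>y \<in> carrier_vec m. x j = transpose_mat A *\<^sub>v y" for j
  proof (induction j)
    case 0 then show ?case using x0 A unfolding row_space_def by auto
  next
    case (Suc j)
    then obtain y where y: "y \<in> carrier_vec m" "x j = transpose_mat A *\<^sub>v y" by auto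
    from seq obtain i where i: "i < dim_row (S * A)"
      and upd: "x (Suc j) = x j + (((S *\<^sub>v b) $ i - scalar_prod (row (S * A) i) (x j)) / (vnorm (row (S * A) i))\<^sup>2) \<cdot>\<^sub>v row (S * A) i"
      unfolding csk_seq_def by blast
    define c where "c = ((S *\<^sub>v b) $ i - scalar_prod (row (S * A) i) (x j)) / (vnorm (row (S * A) i))\<^sup>2"
    have i': "i < d" using i S by simp
    have rS: "row S i \<in> carrier_vec m" using S i' by (auto simp: row_def)
    have u2: "x (Suc j) = x j + c \<cdot>\<^sub>v row (S * A) i" using upd unfolding c_def .
    have "x (Suc j) = transpose_mat A *\<^sub>v (y + c \<cdot>\<^sub>v row S i)"
      unfolding u2 row_mult_transpose[OF S A i'] y(2)
      using A y rS by (simp add: mult_add_distrib_mat_vec[of _ n m] mult_mat_vec)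
    thus ?case using y rS by (intro bexI[of _ "y + c \<cdot>\<^sub>v row S i"], auto)
  qed
  have n0: "n > 0"
  proof (rule ccontr)
    assume "\<not> n > 0"
    hence "A = 0\<^sub>m m n" using A by (intro eq_matI, auto)
    thus False using A0 by simp
  qed
  obtain yk where yk: "yk \<in> carrier_vec m" "x k = transpose_mat A *\<^sub>v yk" using inv by blast
  obtain ys where ys: "ys \<in> carrier_vec m" "xs = transpose_mat A *\<^sub>v ys" using xs(3) by blast
  have xk: "x k \<in> carrier_vec n" using yk A by simp
  define e where "e = x k - xs"
  have e: "e \<in> carrier_vec n" unfolding e_def using xk xs by simp
  have erow: "e \<in> row_space A"
  proof -
    have "e = transpose_mat A *\<^sub>v (yk - ys)" unfolding e_def yk(2) ys(2)
      using A yk ys by (simp add: mult_minus_distrib_mat_vec[of _ n m])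
    thus ?thesis unfolding row_space_def using A yk ys by auto
  qed
  from seq obtain i where i: "i < dim_row (S * A)" and ai: "row (S * A) i \<noteq> 0\<^sub>v (dim_col (S * A))"
    and greedy: "\<forall>j < dim_row (S * A). row (S * A) j \<noteq> 0\<^sub>v (dim_col (S * A)) \<longrightarrow>
          csk_ratio (S * A) (S *\<^sub>v b) (x k) j \<le> csk_ratio (S * A) (S *\<^sub>v b) (x k) i"
    and upd: "x (Suc k) = x k + (((S *\<^sub>v b) $ i - scalar_prod (row (S * A) i) (x k)) / (vnorm (row (S * A) i))\<^sup>2) \<cdot>\<^sub>v row (S * A) i"
    unfolding csk_seq_def by blast
  have dims: "dim_row (S * A) = d" "dim_col (S * A) = n" using S A by auto
  note ks = kacz_step[OF At xs(1) bt xk, of i, unfolded At_def, OF i[unfolded dims] ai[unfolded dims]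
      greedy[unfolded dims] upd]
  define F where "F = (\<Sum>j<d. row At j \<bullet> row At j)"
  define Q where "Q = (At *\<^sub>v e) \<bullet> (At *\<^sub>v e)"
  have Fpos: "F > 0" using ks(2) unfolding F_def At_def .
  have step: "(x (Suc k) - xs) \<bullet> (x (Suc k) - xs) \<le> e \<bullet> e - Q / F"
    using ks(3) unfolding F_def Q_def e_def At_def .
  have AtS: "At *\<^sub>v z = S *\<^sub>v (A *\<^sub>v z)" if "z \<in> carrier_vec n" for z
    unfolding At_def by (rule assoc_mult_mat_vec, use S A that in auto)
  define s2 where "s2 = (sigma_min_nz A)^2"
  define N2 where "N2 = (spec_norm A)^2"
  have s2pos: "s2 > 0" unfolding s2_def using sigma_bound(1)[OF A A0] .
  have Ae: "s2 * (e \<bullet> e) \<le> (A *\<^sub>v e) \<bullet> (A *\<^sub>v e)" unfolding s2_def using sigma_bound(2)[OF A A0] erow by auto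
  have Qlow: "(1 - \<epsilon>) * (s2 * (e \<bullet> e)) \<le> Q"
  proof -
    have "(1 - \<epsilon>) * (s2 * (e \<bullet> e)) \<le> (1 - \<epsilon>) * ((A *\<^sub>v e) \<bullet> (A *\<^sub>v e))"
      using Ae eps by (intro mult_left_mono, auto)
    also have "\<dots> \<le> Q" unfolding Q_def AtS[OF e] using emb e by auto
    finally show ?thesis .
  qed
  have Fup: "F \<le> (1 + \<epsilon>) * real n * N2"
  proof -
    have "F = (\<Sum>l<n. (At *\<^sub>v unit_vec n l) \<bullet> (At *\<^sub>v unit_vec n l))" unfolding F_def by (rule frob_rows_cols[OF At])
    also have "\<dots> \<le> (\<Sum>l<n. (1 + \<epsilon>) * N2)"
    proof (rule sum_mono)
      fix l assume l: "l \<in> {..<n}"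
      have u: "unit_vec n l \<in> carrier_vec n" by simp
      have "(At *\<^sub>v unit_vec n l) \<bullet> (At *\<^sub>v unit_vec n l) \<le> (1 + \<epsilon>) * ((A *\<^sub>v unit_vec n l) \<bullet> (A *\<^sub>v unit_vec n l))"
        unfolding AtS[OF u] using emb u by blast
      also have "\<dots> \<le> (1 + \<epsilon>) * N2" unfolding N2_def
        using spec_norm_bound(2)[OF A] l eps by (intro mult_left_mono, auto)
      finally show "(At *\<^sub>v unit_vec n l) \<bullet> (At *\<^sub>v unit_vec n l) \<le> (1 + \<epsilon>) * N2" .
    qed
    also have "\<dots> = (1 + \<epsilon>) * real n * N2" by simp
    finally show ?thesis .
  qed
  have ee: "e \<bullet> e \<ge> 0" by (rule self_scalar_prod_nonneg)
  have Q0: "Q \<ge> 0" unfolding Q_def by (rule self_scalar_prod_nonneg)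
  define \<rho> where "\<rho> = (1 - \<epsilon>)^3 / real n * (s2 / N2)"
  have key: "\<rho> * (e \<bullet> e) \<le> Q / F"
  proof (cases "N2 = 0")
    case True
    then show ?thesis unfolding \<rho>_def using Q0 Fpos by simp
  next
    case False
    hence N2pos: "N2 > 0" unfolding N2_def by simp
    have "\<rho> * (e \<bullet> e) = ((1 - \<epsilon>)^2 * (1 + \<epsilon>)) * ((1 - \<epsilon>) * (s2 * (e \<bullet> e))) / ((1 + \<epsilon>) * real n * N2)"
    proof -
      have ne: "1 + \<epsilon> \<noteq> 0" "real n \<noteq> 0" "N2 \<noteq> 0" using eps n0 N2pos by auto
      have "((1 - \<epsilon>)^2 * (1 + \<epsilon>)) * ((1 - \<epsilon>) * (s2 * (e \<bullet> e))) / ((1 + \<epsilon>) * real n * N2)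
          = ((1 + \<epsilon>) * ((1 - \<epsilon>)^3 * (s2 * (e \<bullet> e)))) / ((1 + \<epsilon>) * (real n * N2))"
        by (simp add: power3_eq_cube power2_eq_square mult_ac)
      also have "\<dots> = ((1 - \<epsilon>)^3 * (s2 * (e \<bullet> e))) / (real n * N2)"
        using ne(1) by (rule mult_divide_mult_cancel_left)
      also have "\<dots> = \<rho> * (e \<bullet> e)" unfolding \<rho>_def by (simp add: field_simps)
      finally show ?thesis by simp
    qed
    also have "\<dots> \<le> 1 * ((1 - \<epsilon>) * (s2 * (e \<bullet> e))) / ((1 + \<epsilon>) * real n * N2)"
    proof (rule divide_right_mono)
      have "(1 - \<epsilon>)^2 * (1 + \<epsilon>) = 1 - \<epsilon> - \<epsilon>^2 + \<epsilon>^3" by (simp add: power2_eq_square power3_eq_cube algebra_simps)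
      also have "\<dots> \<le> 1"
      proof -
        have "\<epsilon> * \<epsilon> * \<epsilon> \<le> \<epsilon> * \<epsilon> * 1" by (rule mult_left_mono, use eps in auto)
        thus ?thesis using eps mult_nonneg_nonneg[of \<epsilon> \<epsilon>] unfolding power2_eq_square power3_eq_cube by linarith
      qed
      finally have "(1 - \<epsilon>)^2 * (1 + \<epsilon>) \<le> 1" .
      moreover have "(1 - \<epsilon>) * (s2 * (e \<bullet> e)) \<ge> 0" using eps s2pos ee by simp
      ultimately show "((1 - \<epsilon>)^2 * (1 + \<epsilon>)) * ((1 - \<epsilon>) * (s2 * (e \<bullet> e))) \<le> 1 * ((1 - \<epsilon>) * (s2 * (e \<bullet> e)))"
        by (intro mult_right_mono, auto)
    qed (use eps n0 N2pos in simp)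
    also have "\<dots> \<le> Q / ((1 + \<epsilon>) * real n * N2)"
      using Qlow eps n0 N2pos by (simp add: divide_right_mono)
    also have "\<dots> \<le> Q / F" using Fup Fpos Q0 by (intro divide_left_mono, auto)
    finally show ?thesis .
  qed
  have "(x (Suc k) - xs) \<bullet> (x (Suc k) - xs) \<le> (1 - \<rho>) * (e \<bullet> e)"
    using step key by (simp add: algebra_simps)
  thus ?thesis unfolding vnorm_sq xs_def[symmetric] e_def[symmetric] \<rho>_def s2_def N2_def .
qed


definition csX :: "nat \<Rightarrow> (nat \<Rightarrow> nat) \<Rightarrow> (nat \<Rightarrow> real) \<Rightarrow> real vec \<Rightarrow> real vec \<Rightarrow> real" where
  "csX m h s u v = (\<Sum>p<m. \<Sum>q<m. if p \<noteq> q \<and> h p = h q then s p * s q * u$p * v$q else 0)"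

lemma cs_index[simp]: "i < d \<Longrightarrow> p < m \<Longrightarrow> count_sketch d m h s $$ (i, p) = (if h p = i then s p else 0)"
  unfolding count_sketch_def by simp

lemma cs_dims[simp]: "dim_row (count_sketch d m h s) = d" "dim_col (count_sketch d m h s) = m"
  unfolding count_sketch_def by auto

lemma count_sketch_mult_vec:
  assumes u: "u \<in> carrier_vec m" and i: "i < d"
  shows "(count_sketch d m h s *\<^sub>v u) $ i = (\<Sum>p<m. (if h p = i then s p else 0) * u $ p)"
  using u i unfolding count_sketch_def by (simp add: scalar_prod_def row_def lessThan_atLeast0)

lemma sketch_inner:
  assumes h: "\<forall>p<m. h p < d" and s: "\<forall>p<m. s p \<in> {-1, 1}"
    and u: "u \<in> carrier_vec m" and v: "v \<in> carrier_vec m"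
  shows "(count_sketch d m h s *\<^sub>v u) \<bullet> (count_sketch d m h s *\<^sub>v v) = u \<bullet> v + csX m h s u v"
proof -
  define K where "K p q = s p * s q * u$p * v$q" for p q
  have S: "count_sketch d m h s \<in> carrier_mat d m" unfolding count_sketch_def by simp
  have "(count_sketch d m h s *\<^sub>v u) \<bullet> (count_sketch d m h s *\<^sub>v v)
      = (\<Sum>i<d. (\<Sum>p<m. (if h p = i then s p else 0) * u $ p) * (\<Sum>q<m. (if h q = i then s q else 0) * v $ q))"
    using S u v by (auto simp: scalar_prod_def lessThan_atLeast0 intro!: sum.cong)
  also have "\<dots> = (\<Sum>i<d. \<Sum>p<m. \<Sum>q<m. (if h p = i then (if h q = i then K p q else 0) else 0))"
    unfolding K_def sum_product by (intro sum.cong refl, auto)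
  also have "\<dots> = (\<Sum>p<m. \<Sum>q<m. \<Sum>i<d. (if h p = i then (if h q = i then K p q else 0) else 0))"
    by (subst sum.swap, subst (2) sum.swap, rule refl)
  also have "\<dots> = (\<Sum>p<m. \<Sum>q<m. (if h q = h p then K p q else 0))"
  proof (intro sum.cong refl)
    fix p q assume p: "p \<in> {..<m}"
    have "h p \<in> {..<d}" using h p by auto
    thus "(\<Sum>i<d. (if h p = i then (if h q = i then K p q else 0) else 0)) = (if h q = h p then K p q else 0)"
      by (simp add: sum.delta')
  qed
  also have "\<dots> = (\<Sum>p<m. \<Sum>q<m. (if p = q then u$p * v$p else 0) + (if p \<noteq> q \<and> h p = h q then K p q else 0))"
  proof (intro sum.cong refl)
    fix p q assume p: "p \<in> {..<m}"
    have "s p * s p = 1" using s p by auto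
    thus "(if h q = h p then K p q else 0) = (if p = q then u$p * v$p else 0) + (if p \<noteq> q \<and> h p = h q then K p q else 0)"
      unfolding K_def by auto
  qed
  also have "\<dots> = u \<bullet> v + csX m h s u v"
    unfolding csX_def K_def sum.distrib using v by (simp add: scalar_prod_def lessThan_atLeast0)
  finally show ?thesis .
qed


lemma cs_space_finite: "finite (cs_space d m)"
  unfolding cs_space_def by (intro finite_cartesian_product finite_PiE, auto)

lemma cs_space_mem: "(h, s) \<in> cs_space d m \<Longrightarrow> p < m \<Longrightarrow> h p < d \<and> s p \<in> {-1, 1}"
  unfolding cs_space_def by (auto simp: PiE_def Pi_def)

lemma flip_zero:
  fixes f :: "(nat \<Rightarrow> nat) \<times> (nat \<Rightarrow> real) \<Rightarrow> real"
  assumes t: "t < m" and neg: "\<And>h s. (h, s) \<in> cs_space d m \<Longrightarrow> f (h, s(t := - s t)) = - f (h, s)"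
  shows "(\<Sum>\<omega>\<in>cs_space d m. f \<omega>) = 0"
proof -
  define fl where "fl = (\<lambda>(h :: nat \<Rightarrow> nat, s :: nat \<Rightarrow> real). (h, s(t := - s t)))"
  have flin: "fl \<omega> \<in> cs_space d m" if "\<omega> \<in> cs_space d m" for \<omega>
  proof -
    obtain h s where w: "\<omega> = (h, s)" by (cases \<omega>)
    have h: "h \<in> PiE {0..<m} (\<lambda>_. {0..<d})" and s: "s \<in> PiE {0..<m} (\<lambda>_. {-1, 1 :: real})"
      using that unfolding w cs_space_def by auto
    have "s t \<in> {-1, 1}" using s t by (auto simp: PiE_iff)
    hence "- s t \<in> {-1, 1 :: real}" by auto
    from PiE_fun_upd[of "- s t" "\<lambda>_. {-1, 1 :: real}" t s "{0..<m}", OF this s] have "s(t := - s t) \<in> PiE {0..<m} (\<lambda>_. {-1, 1 :: real})"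
      using t by (simp add: insert_absorb)
    thus ?thesis unfolding w fl_def cs_space_def using h by simp
  qed
  have flfl: "fl (fl \<omega>) = \<omega>" for \<omega> unfolding fl_def by (cases \<omega>, auto)
  have bij: "bij_betw fl (cs_space d m) (cs_space d m)"
    by (rule bij_betw_byWitness[of _ fl], auto simp: flfl flin)
  have "(\<Sum>\<omega>\<in>cs_space d m. f \<omega>) = (\<Sum>\<omega>\<in>cs_space d m. f (fl \<omega>))"
    by (rule sum.reindex_bij_betw[OF bij, symmetric])
  also have "\<dots> = (\<Sum>\<omega>\<in>cs_space d m. - f \<omega>)"
    by (intro sum.cong refl, auto simp: fl_def neg)
  finally show ?thesis by (simp add: sum_negf)
qed

lemma count_eq_pair:
  fixes m p q d :: nat
  assumes p: "p < m" and q: "q < m" and pq: "p \<noteq> q"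
  shows "card {h \<in> PiE {0..<m} (\<lambda>_. {0..<d}). h p = h q} * d = card (PiE {0..<m} (\<lambda>_. {0..<d}))"
proof -
  define H where "H = PiE {0..<m} (\<lambda>_. {0..<d :: nat})"
  define H0 where "H0 = {h \<in> H. h p = h q}"
  define \<phi> where "\<phi> = (\<lambda>(h :: nat \<Rightarrow> nat, c :: nat). h(p := c))"
  define \<psi> where "\<psi> = (\<lambda>g :: nat \<Rightarrow> nat. (g(p := g q), g p))"
  have bij: "bij_betw \<phi> (H0 \<times> {0..<d}) H"
  proof (rule bij_betw_byWitness[of _ \<psi>])
    show "\<forall>a\<in>H0 \<times> {0..<d}. \<psi> (\<phi> a) = a"
      unfolding \<phi>_def \<psi>_def H0_def using pq by (auto simp: fun_upd_idem)
    show "\<forall>a'\<in>H. \<phi> (\<psi> a') = a'" unfolding \<phi>_def \<psi>_def by auto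
    show "\<phi> ` (H0 \<times> {0..<d}) \<subseteq> H"
    proof
      fix g assume "g \<in> \<phi> ` (H0 \<times> {0..<d})"
      then obtain h c where hc: "h \<in> H" "c < d" "g = h(p := c)" unfolding \<phi>_def H0_def by auto
      from PiE_fun_upd[of c "\<lambda>_. {0..<d}" p h "{0..<m}"] hc p show "g \<in> H"
        unfolding H_def by (simp add: insert_absorb)
    qed
    show "\<psi> ` H \<subseteq> H0 \<times> {0..<d}"
    proof
      fix x assume "x \<in> \<psi> ` H"
      then obtain g where g: "g \<in> H" "x = (g(p := g q), g p)" unfolding \<psi>_def by auto
      have gq: "g q \<in> {0..<d}" and gp: "g p \<in> {0..<d}" using g p q unfolding H_def by (auto simp: PiE_iff)
      from PiE_fun_upd[of "g q" "\<lambda>_. {0..<d}" p g "{0..<m}"] gq g p have "g(p := g q) \<in> H"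
        unfolding H_def by (simp add: insert_absorb)
      thus "x \<in> H0 \<times> {0..<d}" unfolding H0_def using g pq gp by auto
    qed
  qed
  have "card (H0 \<times> {0..<d}) = card H" by (rule bij_betw_same_card[OF bij])
  thus ?thesis unfolding H0_def H_def by (simp add: card_cartesian_product)
qed

lemma sum_eq_pair:
  fixes m p q d :: nat
  assumes p: "p < m" and q: "q < m" and pq: "p \<noteq> q" and d: "d > 0"
  shows "(\<Sum>\<omega>\<in>cs_space d m. if fst \<omega> p = fst \<omega> q then 1 else 0) = real (card (cs_space d m)) / real d"
proof -
  define H where "H = PiE {0..<m} (\<lambda>_. {0..<d :: nat})"
  define Sg where "Sg = PiE {0..<m} (\<lambda>_. {-1, 1 :: real})"
  have fH: "finite H" and fS: "finite Sg" unfolding H_def Sg_def by (auto intro: finite_PiE)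
  have "(\<Sum>\<omega>\<in>cs_space d m. if fst \<omega> p = fst \<omega> q then 1 else 0 :: real)
      = real (card {\<omega> \<in> cs_space d m. fst \<omega> p = fst \<omega> q})"
    by (simp add: sum.inter_filter[OF cs_space_finite, symmetric])
  also have "{\<omega> \<in> cs_space d m. fst \<omega> p = fst \<omega> q} = {h \<in> H. h p = h q} \<times> Sg"
    unfolding cs_space_def H_def Sg_def by auto
  also have "card \<dots> = card {h \<in> H. h p = h q} * card Sg" by (rule card_cartesian_product)
  finally have e: "(\<Sum>\<omega>\<in>cs_space d m. if fst \<omega> p = fst \<omega> q then 1 else 0 :: real)
      = real (card {h \<in> H. h p = h q}) * real (card Sg)" by simp
  have c: "real (card {h \<in> H. h p = h q}) * real d = real (card H)"
    using arg_cong[OF count_eq_pair[OF p q pq, of d], of real] unfolding H_def of_nat_mult .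
  have "card (cs_space d m) = card H * card Sg" unfolding cs_space_def H_def Sg_def
    by (rule card_cartesian_product)
  thus ?thesis unfolding e using c d by (simp add: field_simps)
qed


lemma T_value:
  fixes m d p q p' q' :: nat
  assumes lt: "p < m" "q < m" "p' < m" "q' < m" and pq: "p \<noteq> q" "p' \<noteq> q'" and d: "d > 0"
  shows "(\<Sum>\<omega>\<in>cs_space d m. if fst \<omega> p = fst \<omega> q \<and> fst \<omega> p' = fst \<omega> q'
           then snd \<omega> p * snd \<omega> q * snd \<omega> p' * snd \<omega> q' else 0)
         = (if (p = p' \<and> q = q') \<or> (p = q' \<and> q = p') then real (card (cs_space d m)) / real d else 0)"
proof (cases "(p = p' \<and> q = q') \<or> (p = q' \<and> q = p')")
  case True
  have "(\<Sum>\<omega>\<in>cs_space d m. if fst \<omega> p = fst \<omega> q \<and> fst \<omega> p' = fst \<omega> q'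
           then snd \<omega> p * snd \<omega> q * snd \<omega> p' * snd \<omega> q' else 0)
      = (\<Sum>\<omega>\<in>cs_space d m. if fst \<omega> p = fst \<omega> q then 1 else 0)"
  proof (intro sum.cong refl)
    fix \<omega> assume w: "\<omega> \<in> cs_space d m"
    obtain h s where hs: "\<omega> = (h, s)" by (cases \<omega>)
    have "s p \<in> {-1, 1}" "s q \<in> {-1, 1}"
      using cs_space_mem[OF w[unfolded hs]] lt by auto
    hence sp: "s p * s p = 1" and sq: "s q * s q = 1" by auto
    show "(if fst \<omega> p = fst \<omega> q \<and> fst \<omega> p' = fst \<omega> q'
           then snd \<omega> p * snd \<omega> q * snd \<omega> p' * snd \<omega> q' else 0) = (if fst \<omega> p = fst \<omega> q then 1 else 0)"
      unfolding hs using True sp sq by (auto simp: mult_ac)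
  qed
  also have "\<dots> = real (card (cs_space d m)) / real d" by (rule sum_eq_pair[OF lt(1,2) pq(1) d])
  finally show ?thesis using True by simp
next
  case False
  define f where "f \<omega> = (if fst \<omega> p = fst \<omega> q \<and> fst \<omega> p' = fst \<omega> q'
           then snd \<omega> p * snd \<omega> q * snd \<omega> p' * snd \<omega> q' else 0)" for \<omega> :: "(nat \<Rightarrow> nat) \<times> (nat \<Rightarrow> real)"
  have "(\<Sum>\<omega>\<in>cs_space d m. f \<omega>) = 0"
  proof (cases "p \<noteq> p' \<and> p \<noteq> q'")
    case True
    show ?thesis by (rule flip_zero[OF lt(1)], use True pq in \<open>auto simp: f_def\<close>)
  next
    case F2: False
    hence "q \<noteq> p' \<and> q \<noteq> q'" using False pq by auto
    thus ?thesis by (intro flip_zero[OF lt(2)], use pq in \<open>auto simp: f_def\<close>)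
  qed
  moreover have "(if (p = p' \<and> q = q') \<or> (p = q' \<and> q = p') then real (card (cs_space d m)) / real d else 0) = 0"
    by (rule if_not_P[OF False])
  ultimately show ?thesis unfolding f_def by simp
qed


lemma swap5:
  "(\<Sum>x\<in>X. \<Sum>a\<in>A. \<Sum>b\<in>B. \<Sum>c\<in>C. \<Sum>e\<in>E. f x a b c e) = (\<Sum>a\<in>A. \<Sum>b\<in>B. \<Sum>c\<in>C. \<Sum>e\<in>E. \<Sum>x\<in>X. f x a b c e)"
  by (subst sum.swap, rule sum.cong[OF refl], subst sum.swap, rule sum.cong[OF refl],
      subst sum.swap, rule sum.cong[OF refl], subst sum.swap, rule refl)

lemma pair_collapse:
  fixes X Y :: real and p q m :: nat
  assumes "p < m" "q < m"
  shows "(\<Sum>p'<m. \<Sum>q'<m. (if p' = p \<and> q' = q then X else 0) + (if p' = q \<and> q' = p then Y else 0)) = X + Y"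
proof -
  have "(\<Sum>p'<m. \<Sum>q'<m. (if p' = p \<and> q' = q then X else 0) + (if p' = q \<and> q' = p then Y else 0))
     = (\<Sum>p'<m. (if p' = p then X else 0) + (if p' = q then Y else 0))"
  proof (intro sum.cong refl)
    fix p' assume "p' \<in> {..<m}"
    have "(\<Sum>q'<m. (if p' = p \<and> q' = q then X else 0) + (if p' = q \<and> q' = p then Y else 0))
      = (\<Sum>q'<m. (if q' = q then (if p' = p then X else 0) else 0) + (if q' = p then (if p' = q then Y else 0) else 0))"
      by (intro sum.cong refl, auto)
    also have "\<dots> = (if p' = p then X else 0) + (if p' = q then Y else 0)"
      using assms by (simp add: sum.distrib)
    finally show "(\<Sum>q'<m. (if p' = p \<and> q' = q then X else 0) + (if p' = q \<and> q' = p then Y else 0)) = (if p' = p then X else 0) + (if p' = q then Y else 0)" .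
  qed
  also have "\<dots> = X + Y" using assms by (simp add: sum.distrib)
  finally show ?thesis .
qed

lemma second_moment:
  fixes u v :: "real vec" and d m :: nat
  assumes u: "u \<in> carrier_vec m" and v: "v \<in> carrier_vec m" and d: "d > 0"
  shows "(\<Sum>\<omega>\<in>cs_space d m. (csX m (fst \<omega>) (snd \<omega>) u v)^2)
     \<le> real (card (cs_space d m)) / real d * (2 * (u \<bullet> u) * (v \<bullet> v))"
proof -
  define \<Omega> where "\<Omega> = cs_space d m"
  define K where "K = real (card \<Omega>) / real d"
  have K0: "K \<ge> 0" unfolding K_def by simp
  define a where "a \<omega> p q = (if p \<noteq> q \<and> fst \<omega> p = fst \<omega> q then snd \<omega> p * snd \<omega> q * u$p * v$q else 0)"
    for \<omega> :: "(nat \<Rightarrow> nat) \<times> (nat \<Rightarrow> real)" and p q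
  define c where "c p q p' q' = u$p * v$q * u$p' * v$q'" for p q p' q'
  define T where "T p q p' q' = (\<Sum>\<omega>\<in>\<Omega>. if fst \<omega> p = fst \<omega> q \<and> fst \<omega> p' = fst \<omega> q'
           then snd \<omega> p * snd \<omega> q * snd \<omega> p' * snd \<omega> q' else 0)" for p q p' q'
  have X: "csX m (fst \<omega>) (snd \<omega>) u v = (\<Sum>p<m. \<Sum>q<m. a \<omega> p q)" for \<omega>
    unfolding csX_def a_def ..
  have sq: "(csX m (fst \<omega>) (snd \<omega>) u v)^2 = (\<Sum>p<m. \<Sum>p'<m. \<Sum>q<m. \<Sum>q'<m. a \<omega> p q * a \<omega> p' q')" for \<omega>
    unfolding X power2_eq_square sum_product ..
  have "(\<Sum>\<omega>\<in>\<Omega>. (csX m (fst \<omega>) (snd \<omega>) u v)^2) = (\<Sum>p<m. \<Sum>p'<m. \<Sum>q<m. \<Sum>q'<m. \<Sum>\<omega>\<in>\<Omega>. a \<omega> p q * a \<omega> p' q')"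
    unfolding sq by (rule swap5)
  also have "\<dots> = (\<Sum>p<m. \<Sum>p'<m. \<Sum>q<m. \<Sum>q'<m. if p \<noteq> q \<and> p' \<noteq> q' then c p q p' q' * T p q p' q' else 0)"
  proof (intro sum.cong refl)
    fix p p' q q' assume "p \<in> {..<m}" "p' \<in> {..<m}" "q \<in> {..<m}" "q' \<in> {..<m}"
    have "a \<omega> p q * a \<omega> p' q' = (if p \<noteq> q \<and> p' \<noteq> q' then c p q p' q' * (if fst \<omega> p = fst \<omega> q \<and> fst \<omega> p' = fst \<omega> q'
           then snd \<omega> p * snd \<omega> q * snd \<omega> p' * snd \<omega> q' else 0) else 0)" for \<omega>
      unfolding a_def c_def by (auto simp: mult_ac)
    thus "(\<Sum>\<omega>\<in>\<Omega>. a \<omega> p q * a \<omega> p' q') = (if p \<noteq> q \<and> p' \<noteq> q' then c p q p' q' * T p q p' q' else 0)"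
      unfolding T_def by (simp add: sum_distrib_left)
  qed
  also have "\<dots> = (\<Sum>p<m. \<Sum>p'<m. \<Sum>q<m. \<Sum>q'<m. if p \<noteq> q \<and> p' \<noteq> q' \<and> ((p = p' \<and> q = q') \<or> (p = q' \<and> q = p')) then c p q p' q' * K else 0)"
  proof (intro sum.cong refl)
    fix p p' q q' assume lt: "p \<in> {..<m}" "p' \<in> {..<m}" "q \<in> {..<m}" "q' \<in> {..<m}"
    show "(if p \<noteq> q \<and> p' \<noteq> q' then c p q p' q' * T p q p' q' else 0) =
      (if p \<noteq> q \<and> p' \<noteq> q' \<and> ((p = p' \<and> q = q') \<or> (p = q' \<and> q = p')) then c p q p' q' * K else 0)"
    proof (cases "p \<noteq> q \<and> p' \<noteq> q'")
      case True
      have "T p q p' q' = (if (p = p' \<and> q = q') \<or> (p = q' \<and> q = p') then K else 0)"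
        unfolding T_def K_def \<Omega>_def using T_value[of p m q p' q' d] lt True d by auto
      thus ?thesis using True by auto
    qed auto
  qed
  also have "\<dots> = (\<Sum>p<m. \<Sum>q<m. \<Sum>p'<m. \<Sum>q'<m. if p \<noteq> q \<and> p' \<noteq> q' \<and> ((p = p' \<and> q = q') \<or> (p = q' \<and> q = p')) then c p q p' q' * K else 0)"
    by (rule sum.cong[OF refl], rule sum.swap)
  also have "\<dots> = (\<Sum>p<m. \<Sum>q<m. if p \<noteq> q then K * (c p q p q + c p q q p) else 0)"
  proof (intro sum.cong refl)
    fix p q assume lt: "p \<in> {..<m}" "q \<in> {..<m}"
    show "(\<Sum>p'<m. \<Sum>q'<m. if p \<noteq> q \<and> p' \<noteq> q' \<and> ((p = p' \<and> q = q') \<or> (p = q' \<and> q = p')) then c p q p' q' * K else 0)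
        = (if p \<noteq> q then K * (c p q p q + c p q q p) else 0)"
    proof (cases "p = q")
      case False
      have "(\<Sum>p'<m. \<Sum>q'<m. if p \<noteq> q \<and> p' \<noteq> q' \<and> ((p = p' \<and> q = q') \<or> (p = q' \<and> q = p')) then c p q p' q' * K else 0)
         = (\<Sum>p'<m. \<Sum>q'<m. (if p' = p \<and> q' = q then c p q p q * K else 0) + (if p' = q \<and> q' = p then c p q q p * K else 0))"
        using False by (intro sum.cong refl, auto)
      also have "\<dots> = c p q p q * K + c p q q p * K" using lt by (intro pair_collapse, auto)
      finally show ?thesis using False by (simp add: algebra_simps)
    qed simp
  qed
  also have "\<dots> = K * (\<Sum>p<m. \<Sum>q<m. if p \<noteq> q then c p q p q + c p q q p else 0)"
    by (simp add: sum_distrib_left, intro sum.cong refl, auto)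
  also have "\<dots> \<le> K * (2 * (u \<bullet> u) * (v \<bullet> v))"
  proof (rule mult_left_mono[OF _ K0])
    define w where "w p = u$p * v$p" for p
    have uu: "u \<bullet> u = (\<Sum>p<m. (u$p)^2)" using u by (simp add: self_scalar_prod_sum)
    have vv: "v \<bullet> v = (\<Sum>p<m. (v$p)^2)" using v by (simp add: self_scalar_prod_sum)
    have uv: "u \<bullet> v = (\<Sum>p<m. w p)" unfolding w_def using v by (simp add: scalar_prod_def lessThan_atLeast0)
    have s1: "(\<Sum>p<m. \<Sum>q<m. if p \<noteq> q then c p q p q else 0) \<le> (u \<bullet> u) * (v \<bullet> v)"
    proof -
      have "(\<Sum>p<m. \<Sum>q<m. if p \<noteq> q then c p q p q else 0) \<le> (\<Sum>p<m. \<Sum>q<m. (u$p)^2 * (v$q)^2)"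
      proof (intro sum_mono)
        fix p q
        have "c p q p q = (u$p)^2 * (v$q)^2" unfolding c_def by (simp add: power2_eq_square)
        moreover have "(u$p)^2 * (v$q)^2 \<ge> 0" by simp
        ultimately show "(if p \<noteq> q then c p q p q else 0) \<le> (u$p)^2 * (v$q)^2" by auto
      qed
      also have "\<dots> = (u \<bullet> u) * (v \<bullet> v)" unfolding uu vv sum_product ..
      finally show ?thesis .
    qed
    have s2: "(\<Sum>p<m. \<Sum>q<m. if p \<noteq> q then c p q q p else 0) \<le> (u \<bullet> u) * (v \<bullet> v)"
    proof -
      have "(\<Sum>p<m. \<Sum>q<m. if p \<noteq> q then c p q q p else 0) = (\<Sum>p<m. \<Sum>q<m. w p * w q - (if p = q then (w p)^2 else 0))"
        unfolding c_def w_def by (intro sum.cong refl, auto simp: power2_eq_square mult_ac)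
      also have "\<dots> = (\<Sum>p<m. w p)^2 - (\<Sum>p<m. (w p)^2)"
        by (simp add: sum_subtractf power2_eq_square sum_product)
      also have "\<dots> \<le> (u \<bullet> v)^2" unfolding uv by (simp add: sum_nonneg)
      also have "\<dots> \<le> (u \<bullet> u) * (v \<bullet> v)" by (rule vec_cauchy_schwarz, use u v in simp)
      finally show ?thesis .
    qed
    have "(\<Sum>p<m. \<Sum>q<m. if p \<noteq> q then c p q p q + c p q q p else 0)
      = (\<Sum>p<m. \<Sum>q<m. if p \<noteq> q then c p q p q else 0) + (\<Sum>p<m. \<Sum>q<m. if p \<noteq> q then c p q q p else 0)"
      by (simp add: sum.distrib[symmetric] if_distrib) (intro sum.cong refl, auto)
    thus "(\<Sum>p<m. \<Sum>q<m. if p \<noteq> q then c p q p q + c p q q p else 0) \<le> 2 * (u \<bullet> u) * (v \<bullet> v)"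
      using s1 s2 by simp
  qed
  finally show ?thesis unfolding K_def \<Omega>_def by (simp add: mult_ac)
qed


lemma quad_double_sum:
  fixes M :: "real mat"
  assumes M: "M \<in> carrier_mat r r" and c: "c \<in> carrier_vec r"
  shows "c \<bullet> (M *\<^sub>v c) = (\<Sum>j<r. \<Sum>l<r. c$j * c$l * M $$ (j,l))"
  using M c by (simp add: scalar_prod_def lessThan_atLeast0 sum_distrib_left mult_ac)

lemma cs_double_sum:
  fixes c :: "real vec" and D :: "nat \<Rightarrow> nat \<Rightarrow> real"
  shows "\<bar>\<Sum>j<r. \<Sum>l<r. c$j * c$l * D j l\<bar> \<le> sqrt (\<Sum>j<r. \<Sum>l<r. (D j l)^2) * (\<Sum>j<r. (c$j)^2)"
proof -
  let ?I = "{..<r} \<times> {..<r}"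
  have e1: "(\<Sum>j<r. \<Sum>l<r. c$j * c$l * D j l) = (\<Sum>x\<in>?I. (c$fst x * c$snd x) * D (fst x) (snd x))"
    by (simp add: sum.cartesian_product split_beta)
  have e2: "(\<Sum>x\<in>?I. (c$fst x * c$snd x)^2) = (\<Sum>j<r. (c$j)^2)^2"
    by (simp add: sum.cartesian_product split_beta power2_eq_square sum_product mult_ac)
  have e3: "(\<Sum>x\<in>?I. (D (fst x) (snd x))^2) = (\<Sum>j<r. \<Sum>l<r. (D j l)^2)"
    by (simp add: sum.cartesian_product split_beta)
  have "(\<Sum>j<r. \<Sum>l<r. c$j * c$l * D j l)^2 \<le> (\<Sum>j<r. (c$j)^2)^2 * (\<Sum>j<r. \<Sum>l<r. (D j l)^2)"
    unfolding e1 e2[symmetric] e3[symmetric] by (rule Cauchy_Schwarz_ineq_sum)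
  also have "\<dots> = (sqrt (\<Sum>j<r. \<Sum>l<r. (D j l)^2) * (\<Sum>j<r. (c$j)^2))^2"
    by (simp add: power_mult_distrib sum_nonneg)
  finally have sq: "(\<Sum>j<r. \<Sum>l<r. c$j * c$l * D j l)^2 \<le> (sqrt (\<Sum>j<r. \<Sum>l<r. (D j l)^2) * (\<Sum>j<r. (c$j)^2))^2" .
  have y0: "0 \<le> sqrt (\<Sum>j<r. \<Sum>l<r. (D j l)^2) * (\<Sum>j<r. (c$j)^2)" by (simp add: sum_nonneg)
  have "\<bar>\<Sum>j<r. \<Sum>l<r. c$j * c$l * D j l\<bar>^2 \<le> (sqrt (\<Sum>j<r. \<Sum>l<r. (D j l)^2) * (\<Sum>j<r. (c$j)^2))^2"
    using sq by simp
  from power2_le_imp_le[OF this y0] show ?thesis .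
qed


lemma emb_good:
  fixes A U :: "real mat"
  assumes A: "A \<in> carrier_mat m n" and U: "U \<in> carrier_mat m r"
    and UTU: "transpose_mat U * U = 1\<^sub>m r" and UUA: "(U * transpose_mat U) * A = A"
    and hs: "(h, s) \<in> cs_space d m" and eps: "\<epsilon> \<ge> 0"
    and Z: "(\<Sum>j<r. \<Sum>l<r. (csX m h s (col U j) (col U l))^2) \<le> \<epsilon>^2"
    and z: "z \<in> carrier_vec n"
  shows "(1 - \<epsilon>) * ((A *\<^sub>v z) \<bullet> (A *\<^sub>v z)) \<le> (count_sketch d m h s *\<^sub>v (A *\<^sub>v z)) \<bullet> (count_sketch d m h s *\<^sub>v (A *\<^sub>v z))
      \<and> (count_sketch d m h s *\<^sub>v (A *\<^sub>v z)) \<bullet> (count_sketch d m h s *\<^sub>v (A *\<^sub>v z)) \<le> (1 + \<epsilon>) * ((A *\<^sub>v z) \<bullet> (A *\<^sub>v z))"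
proof -
  define S where "S = count_sketch d m h s"
  have S: "S \<in> carrier_mat d m" unfolding S_def count_sketch_def by simp
  have hsd: "\<forall>p<m. h p < d" and ssd: "\<forall>p<m. s p \<in> {-1, 1}" using cs_space_mem[OF hs] by auto
  define y where "y = A *\<^sub>v z"
  have y: "y \<in> carrier_vec m" unfolding y_def using A z by simp
  define c where "c = transpose_mat U *\<^sub>v y"
  have c: "c \<in> carrier_vec r" unfolding c_def using U y by simp
  have yUc: "y = U *\<^sub>v c"
  proof -
    have "y = ((U * transpose_mat U) * A) *\<^sub>v z" unfolding UUA y_def ..
    also have "\<dots> = (U * transpose_mat U) *\<^sub>v y" unfolding y_def by (rule assoc_mult_mat_vec, use U A z in auto)
    also have "\<dots> = U *\<^sub>v c" unfolding c_def by (rule assoc_mult_mat_vec, use U y in auto)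
    finally show ?thesis .
  qed
  have yy: "y \<bullet> y = c \<bullet> c"
  proof -
    have "y \<bullet> y = c \<bullet> ((transpose_mat U * U) *\<^sub>v c)" unfolding yUc by (rule quad_form[OF U c, symmetric])
    thus ?thesis unfolding UTU using c by simp
  qed
  define W where "W = S * U"
  have W: "W \<in> carrier_mat d r" unfolding W_def using S U by simp
  have SyWc: "S *\<^sub>v y = W *\<^sub>v c" unfolding yUc W_def by (rule assoc_mult_mat_vec[symmetric], use S U c in auto)
  define D where "D j l = csX m h s (col U j) (col U l)" for j l
  have colU: "col U j \<in> carrier_vec m" for j using U by (simp add: col_def)
  have WTW: "(transpose_mat W * W) $$ (j,l) = (if j = l then 1 else 0) + D j l" if "j < r" "l < r" for j l
  proof -
    have "(transpose_mat W * W) $$ (j,l) = col W j \<bullet> col W l" using W that by simp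
    also have "col W j = S *\<^sub>v col U j" unfolding W_def by (rule col_mult2, use S U that in auto)
    also have "col W l = S *\<^sub>v col U l" unfolding W_def by (rule col_mult2, use S U that in auto)
    also have "(S *\<^sub>v col U j) \<bullet> (S *\<^sub>v col U l) = col U j \<bullet> col U l + D j l"
      unfolding S_def D_def by (rule sketch_inner[OF hsd ssd colU colU])
    also have "col U j \<bullet> col U l = (transpose_mat U * U) $$ (j,l)" using U that by simp
    finally show ?thesis unfolding UTU using that by simp
  qed
  define R where "R = (\<Sum>j<r. \<Sum>l<r. c$j * c$l * D j l)"
  have SS: "(S *\<^sub>v y) \<bullet> (S *\<^sub>v y) = c \<bullet> c + R"
  proof -
    have "(S *\<^sub>v y) \<bullet> (S *\<^sub>v y) = c \<bullet> ((transpose_mat W * W) *\<^sub>v c)" unfolding SyWc by (rule quad_form[OF W c, symmetric])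
    also have "\<dots> = (\<Sum>j<r. \<Sum>l<r. c$j * c$l * (transpose_mat W * W) $$ (j,l))"
      by (rule quad_double_sum, use W c in auto)
    also have "\<dots> = (\<Sum>j<r. \<Sum>l<r. (if j = l then c$j * c$l else 0) + c$j * c$l * D j l)"
      by (intro sum.cong refl, auto simp: WTW algebra_simps)
    also have "\<dots> = (\<Sum>j<r. (c$j)^2) + R" unfolding R_def
      by (simp add: sum.distrib power2_eq_square)
    also have "(\<Sum>j<r. (c$j)^2) = c \<bullet> c" using c by (simp add: self_scalar_prod_sum)
    finally show ?thesis .
  qed
  have "\<bar>R\<bar> \<le> sqrt (\<Sum>j<r. \<Sum>l<r. (D j l)^2) * (\<Sum>j<r. (c$j)^2)" unfolding R_def by (rule cs_double_sum)
  also have "(\<Sum>j<r. (c$j)^2) = c \<bullet> c" using c by (simp add: self_scalar_prod_sum)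
  also have "sqrt (\<Sum>j<r. \<Sum>l<r. (D j l)^2) \<le> \<epsilon>"
    using Z eps unfolding D_def by (metis real_sqrt_abs real_sqrt_le_mono abs_of_nonneg)
  hence "sqrt (\<Sum>j<r. \<Sum>l<r. (D j l)^2) * (c \<bullet> c) \<le> \<epsilon> * (c \<bullet> c)"
    by (intro mult_right_mono, auto simp: self_scalar_prod_nonneg)
  finally have R: "\<bar>R\<bar> \<le> \<epsilon> * (c \<bullet> c)" by simp
  show ?thesis unfolding S_def[symmetric] y_def[symmetric] SS yy using R by (auto simp: algebra_simps abs_le_iff)
qed


lemma bad_count:
  fixes U :: "real mat" and d m r n :: nat and \<epsilon> :: real
  assumes U: "U \<in> carrier_mat m r" and UTU: "transpose_mat U * U = 1\<^sub>m r" and rn: "r \<le> n"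
    and d: "d > 0" and eps: "\<epsilon> > 0"
  shows "real (card {\<omega> \<in> cs_space d m. \<not> (\<Sum>j<r. \<Sum>l<r. (csX m (fst \<omega>) (snd \<omega>) (col U j) (col U l))^2) \<le> \<epsilon>^2}) * \<epsilon>^2
     \<le> real (card (cs_space d m)) * (2 * (real n)^2) / real d"
proof -
  define \<Omega> where "\<Omega> = cs_space d m"
  define Z where "Z \<omega> = (\<Sum>j<r. \<Sum>l<r. (csX m (fst \<omega>) (snd \<omega>) (col U j) (col U l))^2)" for \<omega>
  define K where "K = real (card \<Omega>) / real d"
  have fin: "finite \<Omega>" unfolding \<Omega>_def by (rule cs_space_finite)
  have Z0: "Z \<omega> \<ge> 0" for \<omega> unfolding Z_def by (simp add: sum_nonneg)
  have colU: "col U j \<in> carrier_vec m" for j using U by (simp add: col_def)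
  have uu: "col U j \<bullet> col U j = 1" if "j < r" for j
  proof -
    have "col U j \<bullet> col U j = (transpose_mat U * U) $$ (j,j)" using U that by simp
    thus ?thesis unfolding UTU using that by simp
  qed
  have "(\<Sum>\<omega>\<in>\<Omega>. Z \<omega>) = (\<Sum>j<r. \<Sum>l<r. \<Sum>\<omega>\<in>\<Omega>. (csX m (fst \<omega>) (snd \<omega>) (col U j) (col U l))^2)"
    unfolding Z_def by (subst sum.swap, rule sum.cong[OF refl], rule sum.swap)
  also have "\<dots> \<le> (\<Sum>j<r. \<Sum>l<r. K * (2 * (col U j \<bullet> col U j) * (col U l \<bullet> col U l)))"
    unfolding K_def \<Omega>_def by (intro sum_mono second_moment colU d)
  also have "\<dots> = (\<Sum>j<r. \<Sum>l<r. 2 * K)" by (intro sum.cong refl, auto simp: uu)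
  also have "\<dots> = 2 * K * (real r)^2" by (simp add: power2_eq_square)
  also have "\<dots> \<le> 2 * K * (real n)^2" using rn unfolding K_def by (intro mult_left_mono, auto)
  finally have sumZ: "(\<Sum>\<omega>\<in>\<Omega>. Z \<omega>) \<le> 2 * K * (real n)^2" .
  define bad where "bad = {\<omega> \<in> \<Omega>. \<not> Z \<omega> \<le> \<epsilon>^2}"
  have "real (card bad) * \<epsilon>^2 = (\<Sum>\<omega>\<in>bad. \<epsilon>^2)" by simp
  also have "\<dots> \<le> (\<Sum>\<omega>\<in>bad. Z \<omega>)" by (intro sum_mono, auto simp: bad_def)
  also have "\<dots> \<le> (\<Sum>\<omega>\<in>\<Omega>. Z \<omega>)" by (rule sum_mono2[OF fin], auto simp: bad_def Z0)
  finally have "real (card bad) * \<epsilon>^2 \<le> 2 * K * (real n)^2" using sumZ by simp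
  thus ?thesis unfolding bad_def Z_def \<Omega>_def K_def by (simp add: field_simps)
qed

theorem theorem2p1:
  "\<exists>C > (0::real). \<forall>(m::nat) (n::nat) (d::nat) (A::real mat) (b::real vec)
      (\<delta>::real) (\<epsilon>::real) (x0::real vec).
    A \<in> carrier_mat m n \<longrightarrow> A \<noteq> 0\<^sub>m m n \<longrightarrow>
    b \<in> carrier_vec m \<longrightarrow> (\<exists>x \<in> carrier_vec n. A *\<^sub>v x = b) \<longrightarrow>
    0 < \<delta> \<longrightarrow> \<delta> < 1 \<longrightarrow> 0 < \<epsilon> \<longrightarrow> \<epsilon> < 1 \<longrightarrow>
    real d \<ge> C * (real n)\<^sup>2 / (\<delta> * \<epsilon>\<^sup>2) \<longrightarrow> d < m \<longrightarrow>
    x0 \<in> row_space A \<longrightarrow>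
    measure_pmf.prob (pmf_of_set (cs_space d m))
      {(h, s) \<in> cs_space d m.
         \<forall>x. x 0 = x0 \<longrightarrow>
           csk_seq (count_sketch d m h s * A) (count_sketch d m h s *\<^sub>v b) x \<longrightarrow>
           (\<forall>k. (vnorm (x (Suc k) - pinv A *\<^sub>v b))\<^sup>2 \<le>
                 (1 - (1 - \<epsilon>)^3 / real n * ((sigma_min_nz A)\<^sup>2 / (spec_norm A)\<^sup>2))
                 * (vnorm (x k - pinv A *\<^sub>v b))\<^sup>2)}
      \<ge> 1 - 2 * \<delta>"
proof (intro exI[of _ "2::real"] conjI allI impI)
  show "(0::real) < 2" by simp
  fix m n d :: nat and A :: "real mat" and b :: "real vec" and \<delta> \<epsilon> :: real and x0 :: "real vec"
  assume A: "A \<in> carrier_mat m n" and A0: "A \<noteq> 0\<^sub>m m n" and b: "b \<in> carrier_vec m"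
    and cons: "\<exists>x \<in> carrier_vec n. A *\<^sub>v x = b" and \<delta>: "0 < \<delta>" "\<delta> < 1" and eps: "0 < \<epsilon>" "\<epsilon> < 1"
    and dbound: "real d \<ge> 2 * (real n)\<^sup>2 / (\<delta> * \<epsilon>\<^sup>2)" and dm: "d < m" and x0: "x0 \<in> row_space A"
  define \<Omega> where "\<Omega> = cs_space d m"
  define E where "E = {(h, s) \<in> cs_space d m.
         \<forall>x. x 0 = x0 \<longrightarrow>
           csk_seq (count_sketch d m h s * A) (count_sketch d m h s *\<^sub>v b) x \<longrightarrow>
           (\<forall>k. (vnorm (x (Suc k) - pinv A *\<^sub>v b))\<^sup>2 \<le>
                 (1 - (1 - \<epsilon>)^3 / real n * ((sigma_min_nz A)\<^sup>2 / (spec_norm A)\<^sup>2))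
                 * (vnorm (x k - pinv A *\<^sub>v b))\<^sup>2)}"
  have n0: "n > 0"
  proof (rule ccontr)
    assume "\<not> n > 0"
    hence "A = 0\<^sub>m m n" using A by (intro eq_matI, auto)
    thus False using A0 by simp
  qed
  have pos: "2 * (real n)\<^sup>2 / (\<delta> * \<epsilon>\<^sup>2) > 0" using n0 \<delta> eps by simp
  hence d0: "d > 0" using dbound by simp
  obtain U T r where rn: "r \<le> n" and U: "U \<in> carrier_mat m r" and T: "T \<in> carrier_mat n r"
    and UTU: "transpose_mat U * U = 1\<^sub>m r"
    and UUA': "(U * transpose_mat U) * transpose_mat (transpose_mat A) = transpose_mat (transpose_mat A)"
    using rowspace_basis[OF transpose_carrier_mat[THEN iffD2, OF A]] by blast
  have UUA: "(U * transpose_mat U) * A = A" using UUA' by simp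
  define Z where "Z \<omega> = (\<Sum>j<r. \<Sum>l<r. (csX m (fst \<omega>) (snd \<omega>) (col U j) (col U l))^2)" for \<omega>
  define good where "good = {\<omega> \<in> \<Omega>. Z \<omega> \<le> \<epsilon>^2}"
  define bad where "bad = {\<omega> \<in> \<Omega>. \<not> Z \<omega> \<le> \<epsilon>^2}"
  have fin: "finite \<Omega>" unfolding \<Omega>_def by (rule cs_space_finite)
  have ne: "\<Omega> \<noteq> {}"
  proof -
    have "(\<lambda>p. if p < m then 0 else undefined, \<lambda>p. if p < m then 1 else undefined) \<in> \<Omega>"
      unfolding \<Omega>_def cs_space_def using d0 by (auto simp: PiE_iff extensional_def)
    thus ?thesis by auto
  qed
  have goodE: "good \<subseteq> \<Omega> \<inter> E"
  proof
    fix \<omega> assume w: "\<omega> \<in> good"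
    obtain h s where hs: "\<omega> = (h, s)" by (cases \<omega>)
    have hsO: "(h, s) \<in> cs_space d m" using w unfolding hs good_def \<Omega>_def by auto
    have Zw: "(\<Sum>j<r. \<Sum>l<r. (csX m h s (col U j) (col U l))^2) \<le> \<epsilon>^2"
      using w unfolding hs good_def Z_def by auto
    have emb: "\<forall>z\<in>carrier_vec n. (1 - \<epsilon>) * ((A *\<^sub>v z) \<bullet> (A *\<^sub>v z)) \<le> (count_sketch d m h s *\<^sub>v (A *\<^sub>v z)) \<bullet> (count_sketch d m h s *\<^sub>v (A *\<^sub>v z))
        \<and> (count_sketch d m h s *\<^sub>v (A *\<^sub>v z)) \<bullet> (count_sketch d m h s *\<^sub>v (A *\<^sub>v z)) \<le> (1 + \<epsilon>) * ((A *\<^sub>v z) \<bullet> (A *\<^sub>v z))"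
      using emb_good[OF A U UTU UUA hsO _ Zw] eps by auto
    have S: "count_sketch d m h s \<in> carrier_mat d m" unfolding count_sketch_def by simp
    have all: "\<forall>x. x 0 = x0 \<longrightarrow>
           csk_seq (count_sketch d m h s * A) (count_sketch d m h s *\<^sub>v b) x \<longrightarrow>
           (\<forall>k. (vnorm (x (Suc k) - pinv A *\<^sub>v b))\<^sup>2 \<le>
                 (1 - (1 - \<epsilon>)^3 / real n * ((sigma_min_nz A)\<^sup>2 / (spec_norm A)\<^sup>2))
                 * (vnorm (x k - pinv A *\<^sub>v b))\<^sup>2)"
    proof (intro allI impI)
      fix x :: "nat \<Rightarrow> real vec" and k
      assume "x 0 = x0" and seq: "csk_seq (count_sketch d m h s * A) (count_sketch d m h s *\<^sub>v b) x"
      hence x0': "x 0 \<in> row_space A" using x0 by simp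
      show "(vnorm (x (Suc k) - pinv A *\<^sub>v b))\<^sup>2 \<le>
                 (1 - (1 - \<epsilon>)^3 / real n * ((sigma_min_nz A)\<^sup>2 / (spec_norm A)\<^sup>2))
                 * (vnorm (x k - pinv A *\<^sub>v b))\<^sup>2"
        by (rule det_main[OF A A0 S b cons eps emb x0' seq])
    qed
    have "(h, s) \<in> E" unfolding E_def mem_Collect_eq case_prod_conv using hsO all by blast
    thus "\<omega> \<in> \<Omega> \<inter> E" using hsO unfolding hs \<Omega>_def by simp
  qed
  have cb: "real (card bad) * \<epsilon>^2 \<le> real (card \<Omega>) * (2 * (real n)^2) / real d"
    unfolding bad_def Z_def \<Omega>_def by (rule bad_count[OF U UTU rn d0 eps(1)])
  have cbd: "real (card bad) \<le> \<delta> * real (card \<Omega>)"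
  proof -
    have "2 * (real n)^2 / real d \<le> \<delta> * \<epsilon>^2"
      using dbound pos d0 \<delta> eps by (simp add: field_simps)
    hence "real (card \<Omega>) * (2 * (real n)^2 / real d) \<le> real (card \<Omega>) * (\<delta> * \<epsilon>^2)"
      by (rule mult_left_mono, simp)
    hence "real (card \<Omega>) * (2 * (real n)^2) / real d \<le> real (card \<Omega>) * (\<delta> * \<epsilon>^2)" by simp
    hence "real (card bad) * \<epsilon>^2 \<le> (\<delta> * real (card \<Omega>)) * \<epsilon>^2" using cb by (simp add: mult_ac)
    thus ?thesis using eps by simp
  qed
  have part: "card good + card bad = card \<Omega>"
  proof -
    have "\<Omega> = good \<union> bad" "good \<inter> bad = {}" unfolding good_def bad_def by auto
    thus ?thesis using fin by (metis card_Un_disjoint finite_Un)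
  qed
  have "measure_pmf.prob (pmf_of_set \<Omega>) E = real (card (\<Omega> \<inter> E)) / real (card \<Omega>)"
    by (rule measure_pmf_of_set[OF ne fin])
  also have "\<dots> \<ge> real (card good) / real (card \<Omega>)"
    using card_mono[OF finite_Int[OF disjI1[OF fin]] goodE] by (simp add: divide_right_mono)
  finally have "measure_pmf.prob (pmf_of_set \<Omega>) E \<ge> real (card good) / real (card \<Omega>)" .
  moreover have "real (card good) / real (card \<Omega>) \<ge> 1 - \<delta>"
  proof -
    have cO: "real (card \<Omega>) > 0" using fin ne by (simp add: card_gt_0_iff)
    have "real (card good) = real (card \<Omega>) - real (card bad)" using part by linarith
    hence "real (card good) \<ge> (1 - \<delta>) * real (card \<Omega>)" using cbd by (simp add: algebra_simps)
    thus ?thesis using cO by (simp add: le_divide_eq)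
  qed
  ultimately show "measure_pmf.prob (pmf_of_set (cs_space d m)) E \<ge> 1 - 2 * \<delta>"
    unfolding \<Omega>_def using \<delta> by linarith
qed


end
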